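(* Let $n\ge 2$ and let $\Delta^c(Q_{4n})$ be the conjugacy super commuting graph of the generalized quaternion group $Q_{4n}$. (i) If $n$ is odd, the Sombor spectrum of $\Delta^c(Q_{4n})$ consists of $-(4n-1)\sqrt2$ with multiplicity $1$, $-(2n-1)\sqrt2$ with multiplicity $2n-3$, $-(2n+1)\sqrt2$ with multiplicity $2n-1$, and the three roots (with multiplicity) of \[\big(x-(4n-1)\sqrt2\big)\big(x-(2n-1)(2n-3)\sqrt2\big)\big(x-(2n-1)(2n+1)\sqrt2\big)-8(n-1)(10n^2-6n+1)\big(x-(2n-1)(2n+1)\sqrt2\big)-8n(10n^2-2n+1)\big(x-(2n-1)(2n-3)\sqrt2\big).\] (ii) If $n$ is even, the Sombor spectrum of $\Delta^c(Q_{4n})$ consists of $-(4n-1)\sqrt2$ with multiplicity $1$, $-(2n-1)\sqrt2$ with multiplicity $2n-3$, $-(n+1)\sqrt2$ with multiplicity $2n-2$, and the four roots (with multiplicity) of \[\big(x-(4n-1)\sqrt2\big)\big(x-(n-1)(n+1)\sqrt2\big)^2\big(x-(2n-1)(2n-3)\sqrt2\big)-8(n-1)(10n^2-6n+1)\big(x-(n-1)(n+1)\sqrt2\big)^2-4n(17n^2-6n+2)\big(x-(2n-3)(2n-1)\sqrt2\big)\big(x-(n-1)(n+1)\sqrt2\big).\]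
   Context: For a finite simple graph $\Gamma$ with vertices $u_1,\dots,u_N$, the Sombor matrix $S(\Gamma)$ has $(i,j)$ entry $\sqrt{\deg(u_i)^2+\deg(u_j)^2}$ if $u_i,u_j$ are adjacent and $0$ otherwise; the Sombor spectrum is the multiset of its eigenvalues. $Q_{4n}=\langle a,b: a^{2n}=e,\ a^n=b^2,\ ba=a^{-1}b\rangle$. The conjugacy super commuting graph $\Delta^c(G)$ has vertex set $G$, and distinct $g,h$ are adjacent iff $g,h$ are conjugate in $G$ or there exist distinct $g'$ conjugate to $g$ and $h'$ conjugate to $h$ with $g'h'=h'g'$. *)

theory Defs
  imports "HOL-Algebra.Generated_Groups" "Jordan_Normal_Form.Char_Poly"
begin

definition graph_deg :: "'v set \<Rightarrow> ('v \<Rightarrow> 'v \<Rightarrow> bool) \<Rightarrow> 'v \<Rightarrow> nat" where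
  "graph_deg V E v = card {u \<in> V. E v u}"

text \<open>A fixed (arbitrary) enumeration u_0, ..., u_(N-1) of the vertex set.
  The Sombor spectrum does not depend on this choice.\<close>
definition vertex_enum :: "'v set \<Rightarrow> nat \<Rightarrow> 'v" where
  "vertex_enum V = (SOME f. bij_betw f {..<card V} V)"

definition sombor_matrix :: "'v set \<Rightarrow> ('v \<Rightarrow> 'v \<Rightarrow> bool) \<Rightarrow> real mat" where
  "sombor_matrix V E = mat (card V) (card V)
     (\<lambda>(i, j). let u = vertex_enum V i; w = vertex_enum V j in
        if E u w then sqrt (real (graph_deg V E u)^2 + real (graph_deg V E w)^2) else 0)"

definition sombor_spectrum :: "'v set \<Rightarrow> ('v \<Rightarrow> 'v \<Rightarrow> bool) \<Rightarrow> complex multiset" where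
  "sombor_spectrum V E = proots (char_poly (map_mat complex_of_real (sombor_matrix V E)))"

definition conj_in :: "('g, 'b) monoid_scheme \<Rightarrow> 'g \<Rightarrow> 'g \<Rightarrow> bool" where
  "conj_in G g h \<longleftrightarrow> g \<in> carrier G \<and> h \<in> carrier G \<and>
     (\<exists>x \<in> carrier G. h = x \<otimes>\<^bsub>G\<^esub> g \<otimes>\<^bsub>G\<^esub> inv\<^bsub>G\<^esub> x)"

definition csc_adj :: "('g, 'b) monoid_scheme \<Rightarrow> 'g \<Rightarrow> 'g \<Rightarrow> bool" where
  "csc_adj G g h \<longleftrightarrow> g \<in> carrier G \<and> h \<in> carrier G \<and> g \<noteq> h \<and>
     (conj_in G g h \<or>
      (\<exists>g' h'. conj_in G g g' \<and> conj_in G h h' \<and> g' \<noteq> h' \<and>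
               g' \<otimes>\<^bsub>G\<^esub> h' = h' \<otimes>\<^bsub>G\<^esub> g'))"

end

theory Submission
  imports Defs
begin


lemma sum_delta_nat: "(j::nat) < N \<Longrightarrow> (\<Sum>l\<in>{0..<N}. (if l = j then x l else 0)) = (x j :: 'a::comm_monoid_add)"
  by (simp add: sum.delta)

lemma if01_mult: "(if a then 1 else 0) * (y::'a::semiring_1) = (if a then y else 0)"
  "y * (if a then 1 else 0) = (if a then y else 0)" by auto

lemma charpoly_perm:
  fixes F :: "'v \<Rightarrow> 'v \<Rightarrow> 'a::field"
  assumes f: "bij_betw f {..<N} V" and h: "bij_betw h {..<N} V"
  shows "char_poly (mat N N (\<lambda>(i,j). F (f i) (f j))) = char_poly (mat N N (\<lambda>(i,j). F (h i) (h j)))"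
proof -
  define \<sigma> where "\<sigma> = (\<lambda>i. inv_into {..<N} h (f i))"
  have fV: "i < N \<Longrightarrow> f i \<in> V" for i using f by (auto simp: bij_betw_def)
  have \<sigma>N: "i < N \<Longrightarrow> \<sigma> i < N" for i
    unfolding \<sigma>_def using fV h by (metis bij_betw_def inv_into_into lessThan_iff)
  have h\<sigma>: "i < N \<Longrightarrow> h (\<sigma> i) = f i" for i
    unfolding \<sigma>_def using fV h by (metis bij_betw_def f_inv_into_f)
  have \<sigma>inj: "i < N \<Longrightarrow> j < N \<Longrightarrow> \<sigma> i = \<sigma> j \<Longrightarrow> i = j" for i j
    using h\<sigma> f by (metis bij_betw_def inj_on_def lessThan_iff)
  define P where "P = mat N N (\<lambda>(i,j). if j = \<sigma> i then 1 else (0::'a))"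
  define Q where "Q = mat N N (\<lambda>(i,j). if i = \<sigma> j then 1 else (0::'a))"
  have P: "P \<in> carrier_mat N N" and Q: "Q \<in> carrier_mat N N" unfolding P_def Q_def by auto
  have PQ: "P * Q = 1\<^sub>m N"
  proof (rule eq_matI)
    fix i j assume ij: "i < dim_row (1\<^sub>m N :: 'a mat)" "j < dim_col (1\<^sub>m N :: 'a mat)"
    have "(P * Q) $$ (i,j) = (\<Sum>l\<in>{0..<N}. (if l = \<sigma> i then (if l = \<sigma> j then 1 else 0) else 0))"
      using ij unfolding P_def Q_def by (auto simp: scalar_prod_def if01_mult intro!: sum.cong)
    also have "\<dots> = (if \<sigma> i = \<sigma> j then 1 else 0)"
      using \<sigma>N ij by (subst sum_delta_nat) auto
    also have "\<dots> = 1\<^sub>m N $$ (i,j)" using ij \<sigma>inj by auto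
    finally show "(P * Q) $$ (i,j) = 1\<^sub>m N $$ (i,j)" .
  qed (auto simp: P_def Q_def)
  have QP: "Q * P = 1\<^sub>m N" by (rule mat_mult_left_right_inverse[OF P Q PQ])
  let ?A = "mat N N (\<lambda>(i,j). F (f i) (f j))"
  let ?B = "mat N N (\<lambda>(i,j). F (h i) (h j))"
  have AB: "?A = P * ?B * Q"
  proof (rule eq_matI)
    fix i j assume ij: "i < dim_row (P * ?B * Q)" "j < dim_col (P * ?B * Q)"
    hence ij: "i < N" "j < N" unfolding P_def Q_def by auto
    have r: "(P * ?B) $$ (i,l) = F (h (\<sigma> i)) (h l)" if "l < N" for l
    proof -
      have "(P * ?B) $$ (i,l) = (\<Sum>m\<in>{0..<N}. (if m = \<sigma> i then F (h m) (h l) else 0))"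
        using ij that unfolding P_def by (auto simp: scalar_prod_def if01_mult intro!: sum.cong)
      also have "\<dots> = F (h (\<sigma> i)) (h l)" using \<sigma>N ij by (subst sum_delta_nat) auto
      finally show ?thesis .
    qed
    have "(P * ?B * Q) $$ (i,j) = (\<Sum>l\<in>{0..<N}. (if l = \<sigma> j then F (h (\<sigma> i)) (h l) else 0))"
      using ij r unfolding Q_def by (auto simp: scalar_prod_def P_def if01_mult intro!: sum.cong)
    also have "\<dots> = F (h (\<sigma> i)) (h (\<sigma> j))" using \<sigma>N ij by (subst sum_delta_nat) auto
    finally show "?A $$ (i,j) = (P * ?B * Q) $$ (i,j)" using ij h\<sigma> by simp
  qed (auto simp: P_def Q_def)
  have "similar_mat ?A ?B"
    by (rule similar_matI[OF _ PQ QP AB], insert P Q, auto)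
  thus ?thesis by (rule char_poly_similar)
qed





lemma card_minus_of_nat:
  assumes "finite A" "p \<in> A"
  shows "(of_nat (card (A - {p})) :: 'a::ring_1) = of_nat (card A) - 1"
proof -
  have "card A \<ge> 1" using assms by (metis One_nat_def Suc_leI card_gt_0_iff empty_iff)
  thus ?thesis using assms by (simp add: card_Diff_singleton of_nat_diff)
qed

lemma sum_const_if_card: "finite A \<Longrightarrow> (\<Sum>q\<in>A. if P q then c else 0) = of_nat (card {q\<in>A. P q}) * (c::'a::semiring_1)"
  by (simp add: sum.If_cases Int_def)

lemma Mcol_lemma:
  fixes W :: "nat \<Rightarrow> nat \<Rightarrow> 'a::field" and \<tau> :: "nat \<Rightarrow> nat"
  assumes \<tau>id: "\<And>s. s < k \<Longrightarrow> \<tau> s = s" and \<tau>k: "\<And>s. s < N \<Longrightarrow> \<tau> s < k"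
  and pt: "p < N" "t < k"
  shows "(\<Sum>q\<in>{0..<N}. (if p = q then 0 else W (\<tau> p) (\<tau> q)) * (if t = q then 1 else if k \<le> q \<and> t = \<tau> q then 1 else 0))
     = of_nat (card {s. s < N \<and> \<tau> s = t}) * W (\<tau> p) t - (if \<tau> p = t then W (\<tau> p) t else 0)"
proof -
    have "(\<Sum>q\<in>{0..<N}. (if p = q then 0 else W (\<tau> p) (\<tau> q)) * (if t = q then 1 else if k \<le> q \<and> t = \<tau> q then 1 else 0))
       = (\<Sum>q\<in>{0..<N}. if \<tau> q = t \<and> q \<noteq> p then W (\<tau> p) t else 0)"
    proof (intro sum.cong refl)
      fix q assume q: "q \<in> {0..<N}"
      show "(if p = q then 0 else W (\<tau> p) (\<tau> q)) * (if t = q then 1 else if k \<le> q \<and> t = \<tau> q then 1 else 0) = (if \<tau> q = t \<and> q \<noteq> p then W (\<tau> p) t else 0)"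
      proof (cases "q < k")
        case True
        then show ?thesis using \<tau>id[OF True] by auto
      next
        case False
        then show ?thesis using pt by auto
      qed
    qed
    also have "\<dots> = of_nat (card {q\<in>{0..<N}. \<tau> q = t \<and> q \<noteq> p}) * W (\<tau> p) t"
      by (rule sum_const_if_card) simp
    also have "{q\<in>{0..<N}. \<tau> q = t \<and> q \<noteq> p} = {s. s < N \<and> \<tau> s = t} - {p}" by auto
    also have "of_nat (card ({s. s < N \<and> \<tau> s = t} - {p})) * W (\<tau> p) t
       = of_nat (card {s. s < N \<and> \<tau> s = t}) * W (\<tau> p) t - (if \<tau> p = t then W (\<tau> p) t else 0)"
    proof (cases "\<tau> p = t")
      case True
      hence "p \<in> {s. s < N \<and> \<tau> s = t}" using pt by auto
      have e: "(of_nat (card ({s. s < N \<and> \<tau> s = t} - {p})) :: 'a) = of_nat (card {s. s < N \<and> \<tau> s = t}) - 1"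
        by (rule card_minus_of_nat[OF _ \<open>p \<in> _\<close>]) simp
      show ?thesis unfolding e using True by (simp add: left_diff_distrib)
    next
      case False
      hence "{s. s < N \<and> \<tau> s = t} - {p} = {s. s < N \<and> \<tau> s = t}" by auto
      thus ?thesis using False by simp
    qed
    finally show ?thesis .
qed

lemma cpm_index: "A \<in> carrier_mat n n \<Longrightarrow> i < n \<Longrightarrow> j < n \<Longrightarrow>
  char_poly_matrix A $$ (i,j) = (if i = j then [:- A $$ (i,j), 1:] else [: - A $$ (i,j) :])"
  unfolding char_poly_matrix_def by (auto simp: one_pCons)

lemma block_charpoly:
  fixes W :: "nat \<Rightarrow> nat \<Rightarrow> 'a::field" and \<tau> :: "nat \<Rightarrow> nat"
  assumes kN: "k \<le> N" and \<tau>id: "\<And>s. s < k \<Longrightarrow> \<tau> s = s" and \<tau>k: "\<And>s. s < N \<Longrightarrow> \<tau> s < k"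
  shows "char_poly (mat N N (\<lambda>(s,t). if s = t then 0 else W (\<tau> s) (\<tau> t))) =
     char_poly (mat k k (\<lambda>(i,j). of_nat (card {s. s < N \<and> \<tau> s = j}) * W i j - (if i = j then W i i else 0)))
     * (\<Prod>s\<in>{k..<N}. [:W (\<tau> s) (\<tau> s), 1:])"
proof -
  define M where "M = mat N N (\<lambda>(s,t). if s = t then 0 else W (\<tau> s) (\<tau> t))"
  define m where "m = (\<lambda>j. card {s. s < N \<and> \<tau> s = j})"
  define Bq where "Bq = mat k k (\<lambda>(i,j). of_nat (m j) * W i j - (if i = j then W i i else (0::'a)))"
  define Pm where "Pm = mat N N (\<lambda>(s,p). if p = s then 1 else if k \<le> s \<and> p = \<tau> s then 1 else (0::'a))"
  define Qm where "Qm = mat N N (\<lambda>(s,p). if p = s then 1 else if k \<le> s \<and> p = \<tau> s then -1 else (0::'a))"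
  define T where "T = mat N N (\<lambda>(s,t). if t < k then (if s < k then Bq $$ (s,t) else 0)
       else if s < k then M $$ (s,t) else if s = t then - W (\<tau> s) (\<tau> s) else 0)"
  have M: "M \<in> carrier_mat N N" and Pm: "Pm \<in> carrier_mat N N" and Qm: "Qm \<in> carrier_mat N N"
    and T: "T \<in> carrier_mat N N"
    unfolding M_def Pm_def Qm_def T_def by auto
  have \<tau>ne: "k \<le> s \<Longrightarrow> s < N \<Longrightarrow> \<tau> s \<noteq> s" for s using \<tau>k[of s] by auto
  have \<tau>N: "s < N \<Longrightarrow> \<tau> s < N" for s using \<tau>k[of s] kN by auto
  have Pmrow: "(\<Sum>p\<in>{0..<N}. Pm $$ (s,p) * x p) = x s + (if k \<le> s then x (\<tau> s) else 0)" if "s < N" for s x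
  proof -
    have "(\<Sum>p\<in>{0..<N}. Pm $$ (s,p) * x p) = (\<Sum>p\<in>{0..<N}. (if p = s then x p else 0) + (if p = \<tau> s then (if k \<le> s then x p else 0) else 0))"
      using that \<tau>ne[of s] unfolding Pm_def by (intro sum.cong) auto
    also have "\<dots> = x s + (if k \<le> s then x (\<tau> s) else 0)"
      using that \<tau>N[of s] by (simp add: sum.distrib sum_delta_nat)
    finally show ?thesis .
  qed
  have Qmrow: "(\<Sum>p\<in>{0..<N}. Qm $$ (s,p) * x p) = x s - (if k \<le> s then x (\<tau> s) else 0)" if "s < N" for s x
  proof -
    have "(\<Sum>p\<in>{0..<N}. Qm $$ (s,p) * x p) = (\<Sum>p\<in>{0..<N}. (if p = s then x p else 0) - (if p = \<tau> s then (if k \<le> s then x p else 0) else 0))"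
      using that \<tau>ne[of s] unfolding Qm_def by (intro sum.cong) auto
    also have "\<dots> = x s - (if k \<le> s then x (\<tau> s) else 0)"
      using that \<tau>N[of s] by (simp add: sum_subtractf sum_delta_nat)
    finally show ?thesis .
  qed
  have PQ: "Pm * Qm = 1\<^sub>m N"
  proof (rule eq_matI)
    fix s t assume st: "s < dim_row (1\<^sub>m N :: 'a mat)" "t < dim_col (1\<^sub>m N :: 'a mat)"
    hence st: "s < N" "t < N" by auto
    have "(Pm * Qm) $$ (s,t) = (\<Sum>p\<in>{0..<N}. Pm $$ (s,p) * Qm $$ (p,t))"
      using st Pm Qm by (auto simp: scalar_prod_def)
    also have "\<dots> = Qm $$ (s,t) + (if k \<le> s then Qm $$ (\<tau> s, t) else 0)"
      by (rule Pmrow[OF st(1)])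
    also have "\<dots> = 1\<^sub>m N $$ (s,t)"
      using st \<tau>N[of s] \<tau>k[of s] unfolding Qm_def by auto
    finally show "(Pm * Qm) $$ (s,t) = 1\<^sub>m N $$ (s,t)" .
  qed (insert Pm Qm, auto)
  have QP: "Qm * Pm = 1\<^sub>m N" by (rule mat_mult_left_right_inverse[OF Pm Qm PQ])
  have Mcol: "(\<Sum>q\<in>{0..<N}. M $$ (p,q) * Pm $$ (q,t)) =
     (if t < k then of_nat (m t) * W (\<tau> p) t - (if \<tau> p = t then W (\<tau> p) t else 0) else M $$ (p,t))"
    if pt: "p < N" "t < N" for p t
  proof (cases "t < k")
    case True
    have "(\<Sum>q\<in>{0..<N}. M $$ (p,q) * Pm $$ (q,t)) = (\<Sum>q\<in>{0..<N}. (if p = q then 0 else W (\<tau> p) (\<tau> q)) * (if t = q then 1 else if k \<le> q \<and> t = \<tau> q then 1 else 0))"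
      using pt unfolding M_def Pm_def by (intro sum.cong) auto
    also have "\<dots> = of_nat (m t) * W (\<tau> p) t - (if \<tau> p = t then W (\<tau> p) t else 0)"
      unfolding m_def by (rule Mcol_lemma[OF \<tau>id \<tau>k pt(1) True])
    finally show ?thesis using True by simp
  next
    case False
    have "(\<Sum>q\<in>{0..<N}. M $$ (p,q) * Pm $$ (q,t)) = (\<Sum>q\<in>{0..<N}. if q = t then M $$ (p,q) else 0)"
    proof (intro sum.cong refl)
      fix q assume q: "q \<in> {0..<N}"
      show "M $$ (p,q) * Pm $$ (q,t) = (if q = t then M $$ (p,q) else 0)"
        using q pt False \<tau>k[of q] unfolding Pm_def by auto
    qed
    also have "\<dots> = M $$ (p,t)" using pt by (simp add: sum_delta_nat)
    finally show ?thesis using False by simp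
  qed
  have QMP: "Qm * (M * Pm) = T"
  proof (rule eq_matI)
    fix s t assume st: "s < dim_row T" "t < dim_col T"
    hence st: "s < N" "t < N" using T by auto
    have Y: "(M * Pm) $$ (p,t) = (if t < k then of_nat (m t) * W (\<tau> p) t - (if \<tau> p = t then W (\<tau> p) t else 0) else M $$ (p,t))"
      if "p < N" for p
      using Mcol[OF that st(2)] that st M Pm by (auto simp: scalar_prod_def)
    have "(Qm * (M * Pm)) $$ (s,t) = (\<Sum>p\<in>{0..<N}. Qm $$ (s,p) * (M * Pm) $$ (p,t))"
      using st Qm M Pm by (auto simp: scalar_prod_def)
    also have "\<dots> = (M * Pm) $$ (s,t) - (if k \<le> s then (M * Pm) $$ (\<tau> s,t) else 0)"
      by (rule Qmrow[OF st(1)])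
    also have "\<dots> = T $$ (s,t)"
      using st Y[of s] Y[of "\<tau> s"] \<tau>N[of s] \<tau>id[of s] \<tau>id[of "\<tau> s"] \<tau>k[of s]
      unfolding T_def Bq_def M_def by auto
    finally show "(Qm * (M * Pm)) $$ (s,t) = T $$ (s,t)" .
  qed (insert T Qm M Pm, auto)
  have MT: "M = Pm * T * Qm"
  proof -
    have "Pm * T * Qm = Pm * (Qm * (M * Pm)) * Qm" using QMP by simp
    also have "\<dots> = (Pm * Qm) * M * (Pm * Qm)"
      using Pm Qm M by (simp add: assoc_mult_mat[of _ N N _ N _ N])
    also have "\<dots> = M" using PQ M by simp
    finally show ?thesis by simp
  qed
  have "similar_mat M T"
    by (rule similar_matI[OF _ PQ QP MT], insert Pm Qm M T, auto)
  hence cM: "char_poly M = char_poly T" by (rule char_poly_similar)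
  define A2 where "A2 = mat k (N - k) (\<lambda>(s,t). [: - M $$ (s, t + k) :])"
  define D where "D = mat (N - k) (N - k) (\<lambda>(i,j). if i = j then [:W (\<tau> (i + k)) (\<tau> (i + k)), 1:] else 0)"
  have CT: "char_poly_matrix T = four_block_mat (char_poly_matrix Bq) A2 (0\<^sub>m (N - k) k) D"
  proof (rule eq_matI)
    fix s t assume st: "s < dim_row (four_block_mat (char_poly_matrix Bq) A2 (0\<^sub>m (N - k) k) D)"
       "t < dim_col (four_block_mat (char_poly_matrix Bq) A2 (0\<^sub>m (N - k) k) D)"
    hence st: "s < N" "t < N" using kN unfolding Bq_def D_def char_poly_matrix_def by auto
    have Bq: "Bq \<in> carrier_mat k k" unfolding Bq_def by simp
    have e: "char_poly_matrix T $$ (s,t) = (if s = t then [:- T $$ (s,t), 1:] else [: - T $$ (s,t):])"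
      by (rule cpm_index[OF T st])
    have Tst: "T $$ (s,t) = (if t < k then (if s < k then Bq $$ (s,t) else 0)
       else if s < k then M $$ (s,t) else if s = t then - W (\<tau> s) (\<tau> s) else 0)"
      using st unfolding T_def by simp
    have dims: "dim_row (char_poly_matrix Bq) = k" "dim_col (char_poly_matrix Bq) = k" "dim_row D = N-k" "dim_col D = N - k"
      using char_poly_matrix_closed[OF Bq] unfolding D_def by auto
    have "(if s = t then [:- T $$ (s,t), 1:] else [: - T $$ (s,t):]) = four_block_mat (char_poly_matrix Bq) A2 (0\<^sub>m (N - k) k) D $$ (s,t)"
    proof (cases "s < k"; cases "t < k")
      assume a: "s < k" "t < k" 
      hence "T $$ (s,t) = Bq $$ (s,t)" unfolding Tst by simp
      thus ?thesis using a st cpm_index[OF Bq, of s t] by (cases "s = t") (auto simp: dims)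
    next
      assume a: "s < k" "\<not> t < k"
      hence "T $$ (s,t) = M $$ (s,t)" unfolding Tst by simp
      thus ?thesis using a st kN by (cases "s = t") (auto simp: dims A2_def)
    next
      assume a: "\<not> s < k" "t < k"
      hence "T $$ (s,t) = 0" unfolding Tst by simp
      thus ?thesis using a st kN by (cases "s = t") (auto simp: dims)
    next
      assume a: "\<not> s < k" "\<not> t < k" 
      hence "T $$ (s,t) = (if s = t then - W (\<tau> s) (\<tau> s) else 0)" unfolding Tst by simp
      moreover have "s - k = t - k \<longleftrightarrow> s = t" using a by auto
      ultimately show ?thesis using st kN a by (cases "s = t") (auto simp: dims D_def)
    qed
    thus "char_poly_matrix T $$ (s,t) = four_block_mat (char_poly_matrix Bq) A2 (0\<^sub>m (N - k) k) D $$ (s,t)"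
      unfolding e .
  qed (insert kN, auto simp: char_poly_matrix_def T_def D_def Bq_def)
  have "det D = prod_list (diag_mat D)"
    by (rule det_upper_triangular[of _ "N - k"]) (auto simp: D_def upper_triangular_def)
  also have "\<dots> = (\<Prod>i = 0..<N - k. [:W (\<tau> (i + k)) (\<tau> (i + k)), 1:])"
    unfolding prod_list_diag_prod by (simp add: D_def)
  also have "\<dots> = (\<Prod>s\<in>{k..<N}. [:W (\<tau> s) (\<tau> s), 1:])"
    using prod.shift_bounds_nat_ivl[of "\<lambda>s. [:W (\<tau> s) (\<tau> s), 1:]" 0 k "N - k"] kN by simp
  finally have dD: "det D = (\<Prod>s\<in>{k..<N}. [:W (\<tau> s) (\<tau> s), 1:])" .
  have "char_poly T = det (four_block_mat (char_poly_matrix Bq) A2 (0\<^sub>m (N - k) k) D)"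
    unfolding char_poly_def CT ..
  also have "\<dots> = char_poly Bq * det D"
    unfolding char_poly_def
    by (rule det_four_block_mat_lower_left_zero) (auto simp: Bq_def A2_def D_def)
  finally show ?thesis using cM dD unfolding M_def Bq_def m_def by simp
qed


lemma label_deg:
  fixes L :: "nat \<Rightarrow> nat"
  assumes x: "x < N"
  shows "card {t. t < N \<and> (x \<noteq> t \<and> (L x = 0 \<or> L t = 0 \<or> L x = L t))} =
    (if L x = 0 then N - 1 else card {t. t < N \<and> L t = 0} + card {t. t < N \<and> L t = L x} - 1)"
proof (cases "L x = 0")
  case True
  hence "{t. t < N \<and> (x \<noteq> t \<and> (L x = 0 \<or> L t = 0 \<or> L x = L t))} = {..<N} - {x}" by auto
  thus ?thesis using True x by simp
next
  case False
  have "{t. t < N \<and> (x \<noteq> t \<and> (L x = 0 \<or> L t = 0 \<or> L x = L t))} = ({t. t < N \<and> L t = 0} \<union> {t. t < N \<and> L t = L x}) - {x}"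
    using False by auto
  moreover have "card ({t. t < N \<and> L t = 0} \<union> {t. t < N \<and> L t = L x}) = card {t. t < N \<and> L t = 0} + card {t. t < N \<and> L t = L x}"
    using False by (intro card_Un_disjoint) auto
  moreover have "x \<in> {t. t < N \<and> L t = 0} \<union> {t. t < N \<and> L t = L x}" using x by simp
  ultimately show ?thesis using False by (simp add: card_Diff_singleton)
qed

lemma label_charpoly:
  fixes L :: "nat \<Rightarrow> nat" and g :: "nat \<Rightarrow> nat"
  assumes Lk: "\<And>t. t < N \<Longrightarrow> L t < k" and kN: "k \<le> N" and g: "bij_betw g {..<N} {..<N}"
    and rep: "\<And>s. s < k \<Longrightarrow> L (g s) = s"
  defines "E \<equiv> \<lambda>s t. s \<noteq> t \<and> (L s = 0 \<or> L t = 0 \<or> L s = L t)"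
  defines "m \<equiv> \<lambda>i. card {t. t < N \<and> L t = i}"
  defines "dL \<equiv> \<lambda>i. if i = 0 then N - 1 else m 0 + m i - 1"
  defines "Wc \<equiv> \<lambda>i j. complex_of_real (if i = 0 \<or> j = 0 \<or> i = j then sqrt (real (dL i)^2 + real (dL j)^2) else 0)"
  shows "char_poly (mat N N (\<lambda>(s,t). complex_of_real (if E (g s) (g t) then
      sqrt (real (card {u. u < N \<and> E (g s) u})^2 + real (card {u. u < N \<and> E (g t) u})^2) else 0)))
   = char_poly (mat k k (\<lambda>(i,j). of_nat (m j) * Wc i j - (if i = j then Wc i i else 0))) * (\<Prod>s\<in>{k..<N}. [:Wc (L (g s)) (L (g s)), 1:])"
proof -
  have gN: "s < N \<Longrightarrow> g s < N" for s using g by (auto simp: bij_betw_def)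
  have ginj: "s < N \<Longrightarrow> t < N \<Longrightarrow> g s = g t \<longleftrightarrow> s = t" for s t
    using g by (auto simp: bij_betw_def inj_on_def)
  have deg: "card {u. u < N \<and> E x u} = dL (L x)" if "x < N" for x
    using label_deg[OF that, of L] unfolding E_def dL_def m_def by simp
  have mat_eq: "mat N N (\<lambda>(s,t). complex_of_real (if E (g s) (g t) then
      sqrt (real (card {u. u < N \<and> E (g s) u})^2 + real (card {u. u < N \<and> E (g t) u})^2) else 0))
    = mat N N (\<lambda>(s,t). if s = t then 0 else Wc (L (g s)) (L (g t)))"
  proof (rule eq_matI)
    fix s t assume st: "s < dim_row (mat N N (\<lambda>(s,t). if s = t then 0 else Wc (L (g s)) (L (g t))))"
      "t < dim_col (mat N N (\<lambda>(s,t). if s = t then 0 else Wc (L (g s)) (L (g t))))"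
    hence st: "s < N" "t < N" by auto
    show "mat N N (\<lambda>(s,t). complex_of_real (if E (g s) (g t) then
      sqrt (real (card {u. u < N \<and> E (g s) u})^2 + real (card {u. u < N \<and> E (g t) u})^2) else 0)) $$ (s,t) =
      mat N N (\<lambda>(s,t). if s = t then 0 else Wc (L (g s)) (L (g t))) $$ (s,t)"
    proof (cases "s = t")
      case True thus ?thesis using st unfolding E_def by simp
    next
      case False
      hence ne: "g s \<noteq> g t" using ginj[OF st] by simp
      have "E (g s) (g t) \<longleftrightarrow> (L (g s) = 0 \<or> L (g t) = 0 \<or> L (g s) = L (g t))" using ne unfolding E_def by simp
      thus ?thesis using st False deg[OF gN[OF st(1)]] deg[OF gN[OF st(2)]] unfolding Wc_def by simp
    qed
  qed auto
  have mcount: "card {s. s < N \<and> L (g s) = j} = m j" for j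
  proof -
    have inj: "inj_on g {s. s < N \<and> L (g s) = j}"
      by (rule inj_on_subset[OF bij_betw_imp_inj_on[OF g]]) auto
    have surj: "g ` {..<N} = {..<N}" by (rule bij_betw_imp_surj_on[OF g])
    have "g ` {s. s < N \<and> L (g s) = j} = {t. t < N \<and> L t = j}"
    proof
      show "g ` {s. s < N \<and> L (g s) = j} \<subseteq> {t. t < N \<and> L t = j}" using gN by auto
      show "{t. t < N \<and> L t = j} \<subseteq> g ` {s. s < N \<and> L (g s) = j}"
      proof
        fix t assume t: "t \<in> {t. t < N \<and> L t = j}"
        hence "t \<in> g ` {..<N}" using surj by simp
        then obtain s where "s < N" "t = g s" by auto
        thus "t \<in> g ` {s. s < N \<and> L (g s) = j}" using t by auto
      qed
    qed
    thus ?thesis using card_image[OF inj] unfolding m_def by simp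
  qed
  show ?thesis unfolding mat_eq
    using block_charpoly[of k N "\<lambda>s. L (g s)" Wc] rep Lk gN kN mcount by simp
qed


lemma (in group) conj_inv_swap:
  assumes b: "b \<in> carrier G" and x: "x \<in> carrier G" and y: "y \<in> carrier G"
    and e: "b \<otimes> x = y \<otimes> b"
  shows "b \<otimes> inv x = inv y \<otimes> b"
proof -
  have "b \<otimes> inv x = inv y \<otimes> (y \<otimes> b) \<otimes> inv x"
    using b x y by (simp add: m_assoc[symmetric])
  also have "\<dots> = inv y \<otimes> (b \<otimes> x) \<otimes> inv x" using e by simp
  also have "\<dots> = inv y \<otimes> b" using b x y by (simp add: m_assoc)
  finally show ?thesis .
qed

lemma (in group) conj_pow_nat:
  assumes b: "b \<in> carrier G" and x: "x \<in> carrier G" and y: "y \<in> carrier G"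
    and e: "b \<otimes> x = y \<otimes> b"
  shows "b \<otimes> x [^] (k::nat) = y [^] k \<otimes> b"
proof (induction k)
  case 0 then show ?case using b by simp
next
  case (Suc k)
  have "b \<otimes> x [^] Suc k = (b \<otimes> x [^] k) \<otimes> x" using b x by (simp add: m_assoc)
  also have "\<dots> = y [^] k \<otimes> (b \<otimes> x)" using Suc b x y by (simp add: m_assoc)
  also have "\<dots> = (y [^] k \<otimes> y) \<otimes> b" using e b y by (simp add: m_assoc)
  finally show ?case by simp
qed

lemma (in group) conj_pow_int:
  assumes b: "b \<in> carrier G" and x: "x \<in> carrier G" and y: "y \<in> carrier G"
    and e: "b \<otimes> x = y \<otimes> b"
  shows "b \<otimes> x [^] (i::int) = y [^] i \<otimes> b"
proof (cases "i < 0")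
  case True
  have k: "b \<otimes> x [^] (nat (- i)) = y [^] (nat (- i)) \<otimes> b" by (rule conj_pow_nat[OF assms])
  have "b \<otimes> inv (x [^] nat (- i)) = inv (y [^] nat (- i)) \<otimes> b"
    by (rule conj_inv_swap[OF b nat_pow_closed[OF x] nat_pow_closed[OF y] k])
  thus ?thesis using True by (simp only: int_pow_def2 if_True)
next
  case False
  have k: "b \<otimes> x [^] (nat i) = y [^] (nat i) \<otimes> b" by (rule conj_pow_nat[OF assms])
  thus ?thesis using False by (simp only: int_pow_def2 if_False)
qed

definition qlab :: "nat \<Rightarrow> nat \<Rightarrow> nat" where
  "qlab n t = (if 2 * n \<le> t then (if odd n then 2 else 2 + t mod 2) else if t = 0 \<or> t = n then 0 else 1)"

lemma int_dvd_small: "0 \<le> x \<Longrightarrow> x < m \<Longrightarrow> 0 \<le> y \<Longrightarrow> y < m \<Longrightarrow> (m::int) dvd x - y \<longleftrightarrow> x = y"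
  by (metis mod_eq_dvd_iff mod_pos_pos_trivial dvd_0_right diff_self)

lemma nat_dvd_small: "(s::nat) < 2 * n \<Longrightarrow> n dvd s \<longleftrightarrow> s = 0 \<or> s = n"
proof
  assume s: "s < 2 * n" and "n dvd s"
  then obtain q where q: "s = n * q" by (auto elim: dvdE)
  hence "q < 2" using s by (metis mult.commute nat_mult_less_cancel_disj)
  hence "q = 0 \<or> q = 1" by auto
  thus "s = 0 \<or> s = n" using q by auto
qed auto

locale q4 = group G for G (structure) +
  fixes a b :: 'g and n :: nat
  assumes n2: "n \<ge> 2" and a: "a \<in> carrier G" and b: "b \<in> carrier G"
    and gen: "generate G {a, b} = carrier G"
    and card4: "card (carrier G) = 4 * n"
    and a2n: "a [^] (2 * n) = \<one>"
    and an: "a [^] n = b [^] (2::nat)"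
    and ba: "b \<otimes> a = inv a \<otimes> b"
begin

definition A :: "int \<Rightarrow> 'g" where "A i = a [^] i"
definition elt :: "int \<Rightarrow> bool \<Rightarrow> 'g" where "elt i d = (if d then A i \<otimes> b else A i)"

lemma A_closed[simp]: "A i \<in> carrier G" unfolding A_def using a by simp
lemma elt_closed[simp]: "elt i d \<in> carrier G" unfolding elt_def using b by simp
lemma A_add: "A (i + j) = A i \<otimes> A j" unfolding A_def using a by (simp add: int_pow_mult)
lemma A_2n: "A (2 * int n) = \<one>"
proof -
  have "A (2 * int n) = a [^] (2 * n)" unfolding A_def by (metis int_pow_int of_nat_mult of_nat_numeral)
  thus ?thesis using a2n by simp
qed
lemma A_mult_2n: "A (2 * int n * q) = \<one>"
  using A_2n a unfolding A_def by (metis int_pow_one int_pow_pow)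
lemma A_cong: "2 * int n dvd i - k \<Longrightarrow> A i = A k"
proof -
  assume "2 * int n dvd i - k"
  then obtain q where q: "i = k + 2 * int n * q" by (metis dvd_def diff_eq_eq add.commute)
  show "A i = A k" unfolding q A_add A_mult_2n by simp
qed
lemma A_0[simp]: "A 0 = \<one>" unfolding A_def by simp
lemma A_n: "A (int n) = b \<otimes> b"
  unfolding A_def using an b by (simp add: int_pow_int numeral_2_eq_2 )
lemma bA: "b \<otimes> A i = A (- i) \<otimes> b"
proof -
  have "b \<otimes> a [^] i = (inv a) [^] i \<otimes> b"
    by (rule conj_pow_int) (use a b ba in auto)
  thus ?thesis unfolding A_def using a by (simp add: int_pow_inv int_pow_neg)
qed

lemma mFF[simp]: "elt i False \<otimes> elt k False = elt (i + k) False"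
  unfolding elt_def by (simp add: A_add)
lemma mFT[simp]: "elt i False \<otimes> elt k True = elt (i + k) True"
  unfolding elt_def using b by (simp add: A_add m_assoc)
lemma mTF[simp]: "elt i True \<otimes> elt k False = elt (i - k) True"
proof -
  have "elt i True \<otimes> elt k False = A i \<otimes> (b \<otimes> A k)" unfolding elt_def using b by (simp add: m_assoc)
  also have "\<dots> = A i \<otimes> A (- k) \<otimes> b" unfolding bA using b by (simp add: m_assoc)
  also have "\<dots> = elt (i - k) True" unfolding elt_def A_add[symmetric] by simp
  finally show ?thesis .
qed
lemma mTT[simp]: "elt i True \<otimes> elt k True = elt (i - k + int n) False"
proof -
  have "elt i True \<otimes> elt k True = A i \<otimes> (b \<otimes> A k) \<otimes> b" unfolding elt_def using b by (simp add: m_assoc)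
  also have "\<dots> = A i \<otimes> A (- k) \<otimes> (b \<otimes> b)" unfolding bA using b by (simp add: m_assoc)
  also have "\<dots> = elt (i - k + int n) False" unfolding elt_def A_n[symmetric] A_add[symmetric] by simp
  finally show ?thesis .
qed

lemma elt_cong: "2 * int n dvd i - k \<Longrightarrow> elt i d = elt k d"
  unfolding elt_def using A_cong by simp
lemma elt_mod: "elt i d = elt (i mod (2 * int n)) d"
  by (rule elt_cong) (simp add: mod_eq_dvd_iff[symmetric])

definition S where "S = (\<lambda>(i,d). elt i d) ` ({0..<2 * int n} \<times> UNIV)"

lemma elt_in_S: "elt i d \<in> S"
proof -
  have "0 < 2 * int n" using n2 by simp
  hence "(i mod (2 * int n), d) \<in> {0..<2 * int n} \<times> UNIV" by simp
  thus ?thesis unfolding S_def using elt_mod[of i d] by force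
qed

lemma inv_b: "inv b = elt (int n) True"
proof -
  have "elt (int n) True \<otimes> b = \<one>"
  proof -
    have "elt (int n) True \<otimes> b = A (int n) \<otimes> (b \<otimes> b)" unfolding elt_def using b by (simp add: m_assoc)
    also have "\<dots> = A (int n) \<otimes> A (int n)" unfolding A_n ..
    also have "\<dots> = A (2 * int n)" unfolding A_add[symmetric] mult_2 ..
    finally show ?thesis using A_2n by simp
  qed
  from inv_equality[OF this b elt_closed] show ?thesis .
qed

lemma elt_S_ex: "x \<in> S \<Longrightarrow> \<exists>i d. x = elt i d" unfolding S_def by auto

lemma gen_S: "generate G {a, b} \<subseteq> S"
proof
  fix x assume "x \<in> generate G {a, b}"
  then show "x \<in> S"
  proof (induction rule: generate.induct)
    case one
    have "\<one> = elt 0 False" by (simp add: elt_def)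
    thus ?case using elt_in_S by simp
  next
    case (incl h)
    have ha: "a = elt 1 False" using a by (simp add: elt_def A_def)
    have hb: "b = elt 0 True" using b by (simp add: elt_def)
    have "a \<in> S" "b \<in> S" by (metis elt_in_S ha, metis elt_in_S hb)
    thus ?case using incl by auto
  next
    case (inv h)
    have "inv a = elt (-1) False" using a by (simp add: elt_def A_def int_pow_neg)
    thus ?case using inv elt_in_S inv_b by auto
  next
    case (eng h1 h2)
    obtain i d where 1: "h1 = elt i d" using elt_S_ex[OF eng(3)] by auto
    obtain k e where 2: "h2 = elt k e" using elt_S_ex[OF eng(4)] by auto
    show ?case unfolding 1 2 by (cases d; cases e) (simp_all add: elt_in_S)
  qed
qed

lemma S_carrier: "S = carrier G"
proof
  show "S \<subseteq> carrier G" unfolding S_def by auto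
  show "carrier G \<subseteq> S" using gen_S gen by simp
qed

lemma elt_inj: "inj_on (\<lambda>(i,d). elt i d) ({0..<2 * int n} \<times> UNIV)"
proof (rule eq_card_imp_inj_on)
  show "finite ({0..<2 * int n} \<times> (UNIV :: bool set))" by simp
  have "card ((\<lambda>(i,d). elt i d) ` ({0..<2 * int n} \<times> UNIV)) = 4 * n"
    using S_carrier card4 unfolding S_def by simp
  also have "\<dots> = card ({0..<2 * int n} \<times> (UNIV :: bool set))"
    by (simp add: card_cartesian_product)
  finally show "card ((\<lambda>(i,d). elt i d) ` ({0..<2 * int n} \<times> UNIV)) = card ({0..<2 * int n} \<times> (UNIV :: bool set))" .
qed

lemma elt_eq: "elt i d = elt k e \<longleftrightarrow> d = e \<and> 2 * int n dvd i - k"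
proof
  assume h: "elt i d = elt k e"
  have pos: "0 < 2 * int n" using n2 by simp
  have "elt (i mod (2 * int n)) d = elt (k mod (2 * int n)) e" using h elt_mod[of i d] elt_mod[of k e] by simp
  hence "(i mod (2 * int n), d) = (k mod (2 * int n), e)"
    using inj_onD[OF elt_inj, of "(i mod (2 * int n), d)" "(k mod (2 * int n), e)"] pos by auto
  thus "d = e \<and> 2 * int n dvd i - k" by (simp add: mod_eq_dvd_iff)
next
  assume "d = e \<and> 2 * int n dvd i - k"
  thus "elt i d = elt k e" using elt_cong by simp
qed

lemma carrier_elt: "x \<in> carrier G \<Longrightarrow> \<exists>i d. x = elt i d"
  using S_carrier elt_S_ex by auto

lemma conj_iff_comm:
  assumes "x \<in> carrier G" "g \<in> carrier G" "h \<in> carrier G"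
  shows "h = x \<otimes> g \<otimes> inv x \<longleftrightarrow> h \<otimes> x = x \<otimes> g"
proof
  assume "h = x \<otimes> g \<otimes> inv x"
  thus "h \<otimes> x = x \<otimes> g" using assms by (simp add: m_assoc)
next
  assume e: "h \<otimes> x = x \<otimes> g"
  have "h = h \<otimes> x \<otimes> inv x" using assms by (simp add: m_assoc)
  thus "h = x \<otimes> g \<otimes> inv x" using e by simp
qed

lemma conj_elt: "conj_in G (elt i d) (elt k e) \<longleftrightarrow> (\<exists>c f. elt k e \<otimes> elt c f = elt c f \<otimes> elt i d)"
proof -
  have "conj_in G (elt i d) (elt k e) \<longleftrightarrow> (\<exists>x\<in>carrier G. elt k e \<otimes> x = x \<otimes> elt i d)"
    unfolding conj_in_def using conj_iff_comm by auto
  also have "\<dots> \<longleftrightarrow> (\<exists>c f. elt k e \<otimes> elt c f = elt c f \<otimes> elt i d)"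
    using carrier_elt by fastforce
  finally show ?thesis .
qed


lemma dvd2: "2 * int n dvd 2 * x \<longleftrightarrow> int n dvd x"
  using dvd_mult_cancel_left[of 2 "int n" x] by (simp only: mult.assoc) simp

lemma conjF: "conj_in G (elt i False) (elt k e) \<longleftrightarrow> \<not> e \<and> (2 * int n dvd k - i \<or> 2 * int n dvd k + i)"
proof (cases e)
  case True
  thus ?thesis unfolding conj_elt by (auto simp: elt_eq ex_bool_eq)
next
  case False
  have "k + c - (c + i) = k - i" "k + c - (c - i) = k + i" for c :: int by simp_all
  thus ?thesis unfolding conj_elt using False by (auto simp: elt_eq ex_bool_eq)
qed

lemma conjT: "conj_in G (elt i True) (elt k e) \<longleftrightarrow> e \<and> even (k - i)"
proof (cases e)
  case False
  thus ?thesis unfolding conj_elt by (auto simp: elt_eq ex_bool_eq)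
next
  case True
  have 2: "(2::int) dvd 2 * int n" by simp
  have "(\<exists>c f. elt k True \<otimes> elt c f = elt c f \<otimes> elt i True) \<longleftrightarrow> even (k - i)"
  proof
    assume "\<exists>c f. elt k True \<otimes> elt c f = elt c f \<otimes> elt i True"
    then obtain c f where e: "elt k True \<otimes> elt c f = elt c f \<otimes> elt i True" by auto
    show "even (k - i)"
    proof (cases f)
      case False
      hence "2 * int n dvd k - c - (c + i)" using e by (simp add: elt_eq)
      hence "even (k - c - (c + i))" using 2 dvd_trans by blast
      moreover have "k - c - (c + i) = (k - i) - 2 * c" by simp
      ultimately show ?thesis by simp
    next
      case True
      hence "2 * int n dvd (k - c + int n) - (c - i + int n)" using e by (simp add: elt_eq)
      hence "even ((k - c + int n) - (c - i + int n))" using 2 dvd_trans by blast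
      moreover have "(k - c + int n) - (c - i + int n) = (k - i) + 2 * i - 2 * c" by simp
      ultimately show ?thesis by simp
    qed
  next
    assume ev: "even (k - i)"
    then obtain c where c: "k - i = 2 * c" by (rule evenE)
    have "elt k True \<otimes> elt c False = elt c False \<otimes> elt i True"
      using c by (simp add: elt_eq)
    thus "\<exists>c f. elt k True \<otimes> elt c f = elt c f \<otimes> elt i True" by blast
  qed
  thus ?thesis unfolding conj_elt using True by simp
qed

lemma commFF: "elt i False \<otimes> elt k False = elt k False \<otimes> elt i False"
  by (simp add: add.commute)
lemma commFT: "elt i False \<otimes> elt k True = elt k True \<otimes> elt i False \<longleftrightarrow> int n dvd i"
proof -
  have e: "i + k - (k - i) = 2 * i" by simp
  show ?thesis unfolding mTF mFT elt_eq e dvd2 by simp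
qed
lemma commTF: "elt i True \<otimes> elt k False = elt k False \<otimes> elt i True \<longleftrightarrow> int n dvd k"
proof -
  have e: "i - k - (k + i) = 2 * (- k)" by simp
  show ?thesis unfolding mTF mFT elt_eq e dvd2 by simp
qed
lemma commTT: "elt i True \<otimes> elt k True = elt k True \<otimes> elt i True \<longleftrightarrow> int n dvd i - k"
proof -
  have e: "i - k + int n - (k - i + int n) = 2 * (i - k)" by simp
  show ?thesis unfolding mTT elt_eq e dvd2 by simp
qed


lemma csc_ex: "(\<exists>g' h'. conj_in G g g' \<and> conj_in G h h' \<and> g' \<noteq> h' \<and> g' \<otimes> h' = h' \<otimes> g') \<longleftrightarrow>
   (\<exists>i' d' k' e'. conj_in G g (elt i' d') \<and> conj_in G h (elt k' e') \<and> elt i' d' \<noteq> elt k' e' \<and>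
       elt i' d' \<otimes> elt k' e' = elt k' e' \<otimes> elt i' d')"
proof
  assume "\<exists>g' h'. conj_in G g g' \<and> conj_in G h h' \<and> g' \<noteq> h' \<and> g' \<otimes> h' = h' \<otimes> g'"
  then obtain g' h' where *: "conj_in G g g'" "conj_in G h h'" "g' \<noteq> h'" "g' \<otimes> h' = h' \<otimes> g'" by blast
  have "g' \<in> carrier G" "h' \<in> carrier G" using * unfolding conj_in_def by auto
  then obtain i' d' k' e' where "g' = elt i' d'" "h' = elt k' e'" using carrier_elt by metis
  thus "\<exists>i' d' k' e'. conj_in G g (elt i' d') \<and> conj_in G h (elt k' e') \<and> elt i' d' \<noteq> elt k' e' \<and>
       elt i' d' \<otimes> elt k' e' = elt k' e' \<otimes> elt i' d'" using * by blast
qed blast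

lemma dvd_n_from: "2 * int n dvd x - y \<or> 2 * int n dvd x + y \<Longrightarrow> int n dvd x \<Longrightarrow> int n dvd y"
proof -
  assume h: "2 * int n dvd x - y \<or> 2 * int n dvd x + y" and x: "int n dvd x"
  have nn: "int n dvd 2 * int n" by simp
  from h show "int n dvd y"
  proof
    assume "2 * int n dvd x - y"
    hence "int n dvd x - y" by (rule dvd_trans[OF nn])
    hence "int n dvd x - (x - y)" using x dvd_diff by blast
    thus ?thesis by simp
  next
    assume "2 * int n dvd x + y"
    hence "int n dvd x + y" by (rule dvd_trans[OF nn])
    hence "int n dvd (x + y) - x" using x dvd_diff by blast
    thus ?thesis by simp
  qed
qed

lemma csc_intro: "elt i d \<noteq> elt k e \<Longrightarrow> conj_in G (elt i d) g' \<Longrightarrow> conj_in G (elt k e) h' \<Longrightarrow> g' \<noteq> h' \<Longrightarrow>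
   g' \<otimes> h' = h' \<otimes> g' \<Longrightarrow> csc_adj G (elt i d) (elt k e)"
  unfolding csc_adj_def using elt_closed by blast

lemma csc_dest:
  assumes "csc_adj G g h" "\<not> conj_in G g h"
  obtains i' d' k' e' where "conj_in G g (elt i' d')" "conj_in G h (elt k' e')" "elt i' d' \<noteq> elt k' e'"
     "elt i' d' \<otimes> elt k' e' = elt k' e' \<otimes> elt i' d'"
proof -
  from assms have "\<exists>g' h'. conj_in G g g' \<and> conj_in G h h' \<and> g' \<noteq> h' \<and> g' \<otimes> h' = h' \<otimes> g'"
    unfolding csc_adj_def by blast
  hence "\<exists>i' d' k' e'. conj_in G g (elt i' d') \<and> conj_in G h (elt k' e') \<and> elt i' d' \<noteq> elt k' e' \<and>
       elt i' d' \<otimes> elt k' e' = elt k' e' \<otimes> elt i' d'" by (simp only: csc_ex)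
  thus thesis using that by blast
qed

lemma csc_ne: "csc_adj G g h \<Longrightarrow> g \<noteq> h" unfolding csc_adj_def by simp

lemma csc_FF: "csc_adj G (elt i False) (elt k False) \<longleftrightarrow> elt i False \<noteq> elt k False"
proof
  assume "elt i False \<noteq> elt k False"
  moreover have "conj_in G (elt i False) (elt i False)" "conj_in G (elt k False) (elt k False)" by (simp_all add: conjF)
  ultimately show "csc_adj G (elt i False) (elt k False)" using csc_intro commFF by blast
qed (rule csc_ne)

lemma csc_FT: "csc_adj G (elt i False) (elt k True) \<longleftrightarrow> int n dvd i"
proof
  assume c: "csc_adj G (elt i False) (elt k True)"
  have "\<not> conj_in G (elt i False) (elt k True)" by (simp add: conjF)
  then obtain i' d' k' e' where *: "conj_in G (elt i False) (elt i' d')" "conj_in G (elt k True) (elt k' e')"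
     "elt i' d' \<otimes> elt k' e' = elt k' e' \<otimes> elt i' d'"
    using csc_dest[OF c] by metis
  have d': "\<not> d'" and c1: "2 * int n dvd i' - i \<or> 2 * int n dvd i' + i" using *(1) by (simp_all add: conjF)
  have e': "e'" using *(2) by (simp add: conjT)
  have "int n dvd i'" using *(3) d' e' commFT by simp
  thus "int n dvd i" using dvd_n_from[OF c1] by blast
next
  assume "int n dvd i"
  moreover have "conj_in G (elt i False) (elt i False)" "conj_in G (elt k True) (elt k True)" by (simp_all add: conjF conjT)
  moreover have "elt i False \<noteq> elt k True" by (simp add: elt_eq)
  ultimately show "csc_adj G (elt i False) (elt k True)" using csc_intro commFT by blast
qed

lemma csc_TF: "csc_adj G (elt i True) (elt k False) \<longleftrightarrow> int n dvd k"
proof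
  assume c: "csc_adj G (elt i True) (elt k False)"
  have "\<not> conj_in G (elt i True) (elt k False)" by (simp add: conjT)
  then obtain i' d' k' e' where *: "conj_in G (elt i True) (elt i' d')" "conj_in G (elt k False) (elt k' e')"
     "elt i' d' \<otimes> elt k' e' = elt k' e' \<otimes> elt i' d'"
    using csc_dest[OF c] by metis
  have e': "\<not> e'" and c1: "2 * int n dvd k' - k \<or> 2 * int n dvd k' + k" using *(2) by (simp_all add: conjF)
  have d': "d'" using *(1) by (simp add: conjT)
  have "int n dvd k'" using *(3) d' e' commTF by simp
  thus "int n dvd k" using dvd_n_from[OF c1] by blast
next
  assume "int n dvd k"
  moreover have "conj_in G (elt i True) (elt i True)" "conj_in G (elt k False) (elt k False)" by (simp_all add: conjF conjT)
  moreover have "elt i True \<noteq> elt k False" by (simp add: elt_eq)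
  ultimately show "csc_adj G (elt i True) (elt k False)" using csc_intro commTF by blast
qed

lemma csc_TT: "csc_adj G (elt i True) (elt k True) \<longleftrightarrow> elt i True \<noteq> elt k True \<and> (odd n \<or> even (k - i))"
proof
  assume c: "csc_adj G (elt i True) (elt k True)"
  hence ne: "elt i True \<noteq> elt k True" by (rule csc_ne)
  have "odd n \<or> even (k - i)"
  proof (cases "conj_in G (elt i True) (elt k True)")
    case True thus ?thesis by (simp add: conjT)
  next
    case False
    then obtain i' d' k' e' where *: "conj_in G (elt i True) (elt i' d')" "conj_in G (elt k True) (elt k' e')"
       "elt i' d' \<otimes> elt k' e' = elt k' e' \<otimes> elt i' d'"
      using csc_dest[OF c] by metis
    have d': "d'" "even (i' - i)" using *(1) by (simp_all add: conjT)
    have e': "e'" "even (k' - k)" using *(2) by (simp_all add: conjT)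
    have nd: "int n dvd i' - k'" using *(3) d' e' commTT by simp
    show ?thesis
    proof (cases "even n")
      case True
      hence "even (int n)" by simp
      hence "even (i' - k')" by (rule dvd_trans[OF _ nd])
      moreover have "k - i = (k - k') + (k' - i') + (i' - i)" by simp
      ultimately have "even (k - i)" using d'(2) e'(2) by simp
      thus ?thesis by simp
    qed simp
  qed
  thus "elt i True \<noteq> elt k True \<and> (odd n \<or> even (k - i))" using ne by simp
next
  assume h: "elt i True \<noteq> elt k True \<and> (odd n \<or> even (k - i))"
  show "csc_adj G (elt i True) (elt k True)"
  proof (cases "even (k - i)")
    case True thus ?thesis using h unfolding csc_adj_def by (simp add: conjT)
  next
    case False
    hence on: "odd n" using h by simp
    have "conj_in G (elt i True) (elt i True)" by (simp add: conjT)
    moreover have "conj_in G (elt k True) (elt (i + int n) True)"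
      using on False by (simp add: conjT)
    moreover have "elt i True \<noteq> elt (i + int n) True"
    proof
      assume "elt i True = elt (i + int n) True"
      hence "2 * int n dvd - int n" by (simp add: elt_eq)
      hence "2 * int n dvd int n" by simp
      moreover have "0 < int n" using n2 by simp
      ultimately show False using zdvd_imp_le by fastforce
    qed
    moreover have "elt i True \<otimes> elt (i + int n) True = elt (i + int n) True \<otimes> elt i True"
      unfolding commTT by simp
    ultimately show ?thesis using h csc_intro by blast
  qed
qed


definition psi :: "nat \<Rightarrow> 'g" where "psi t = elt (int (t mod (2 * n))) (2 * n \<le> t)"

lemma psi_lo: "t < 2 * n \<Longrightarrow> psi t = elt (int t) False" unfolding psi_def by simp
lemma psi_hi: "2 * n \<le> t \<Longrightarrow> t < 4 * n \<Longrightarrow> psi t = elt (int t - 2 * int n) True"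
proof -
  assume h: "2 * n \<le> t" "t < 4 * n"
  hence "t mod (2 * n) = t - 2 * n" by (simp add: le_mod_geq)
  thus ?thesis unfolding psi_def using h by simp
qed

lemma psi_eq: "s < 4 * n \<Longrightarrow> t < 4 * n \<Longrightarrow> psi s = psi t \<longleftrightarrow> s = t"
proof
  assume st: "s < 4 * n" "t < 4 * n" and e: "psi s = psi t"
  show "s = t"
  proof (cases "s < 2 * n"; cases "t < 2 * n")
    assume "s < 2 * n" "t < 2 * n"
    thus ?thesis using e by (simp add: psi_lo elt_eq int_dvd_small)
  next
    assume "s < 2 * n" "\<not> t < 2 * n"
    thus ?thesis using e st by (simp add: psi_lo psi_hi elt_eq)
  next
    assume "\<not> s < 2 * n" "t < 2 * n"
    thus ?thesis using e st by (simp add: psi_lo psi_hi elt_eq)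
  next
    assume a: "\<not> s < 2 * n" "\<not> t < 2 * n"
    hence "2 * int n dvd (int s - 2 * int n) - (int t - 2 * int n)" using e st by (simp add: psi_hi elt_eq)
    hence "int s - 2 * int n = int t - 2 * int n" using a st by (subst (asm) int_dvd_small) auto
    thus ?thesis by simp
  qed
qed simp

lemma psi_bij: "bij_betw psi {..<4 * n} (carrier G)"
proof -
  have inj: "inj_on psi {..<4 * n}" using psi_eq by (auto simp: inj_on_def)
  have sub: "psi ` {..<4 * n} \<subseteq> carrier G" unfolding psi_def by auto
  have "card (psi ` {..<4 * n}) = card (carrier G)" using card_image[OF inj] card4 by simp
  moreover have "finite (carrier G)" using card4 n2 by (intro card_ge_0_finite) simp
  ultimately have "psi ` {..<4 * n} = carrier G" using sub card_subset_eq by blast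
  thus ?thesis using inj by (simp add: bij_betw_def)
qed

lemma csc_psi:
  assumes st: "s < 4 * n" "t < 4 * n"
  shows "csc_adj G (psi s) (psi t) \<longleftrightarrow> s \<noteq> t \<and> (qlab n s = 0 \<or> qlab n t = 0 \<or> qlab n s = qlab n t)"
proof (cases "s < 2 * n"; cases "t < 2 * n")
  assume a: "s < 2 * n" "t < 2 * n"
  have "csc_adj G (psi s) (psi t) \<longleftrightarrow> s \<noteq> t" using a csc_FF psi_eq[OF st] by (simp add: psi_lo)
  moreover have "qlab n s = 0 \<or> qlab n t = 0 \<or> qlab n s = qlab n t" using a by (simp add: qlab_def)
  ultimately show ?thesis by simp
next
  assume a: "s < 2 * n" "\<not> t < 2 * n"
  have "csc_adj G (psi s) (psi t) \<longleftrightarrow> n dvd s" using a st by (simp add: psi_lo psi_hi csc_FT)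
  also have "\<dots> \<longleftrightarrow> s = 0 \<or> s = n" using a nat_dvd_small by simp
  finally show ?thesis using a by (auto simp: qlab_def)
next
  assume a: "\<not> s < 2 * n" "t < 2 * n"
  have "csc_adj G (psi s) (psi t) \<longleftrightarrow> n dvd t" using a st by (simp add: psi_lo psi_hi csc_TF)
  also have "\<dots> \<longleftrightarrow> t = 0 \<or> t = n" using a nat_dvd_small by simp
  finally show ?thesis using a by (auto simp: qlab_def)
next
  assume a: "\<not> s < 2 * n" "\<not> t < 2 * n"
  have ev: "even ((int t - 2 * int n) - (int s - 2 * int n)) \<longleftrightarrow> (even s \<longleftrightarrow> even t)" by auto
  have "csc_adj G (psi s) (psi t) \<longleftrightarrow> s \<noteq> t \<and> (odd n \<or> (even s \<longleftrightarrow> even t))"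
    using a st psi_eq[OF st] ev by (simp add: psi_hi csc_TT)
  also have "\<dots> \<longleftrightarrow> s \<noteq> t \<and> (qlab n s = 0 \<or> qlab n t = 0 \<or> qlab n s = qlab n t)"
    using a by (auto simp: qlab_def odd_iff_mod_2_eq_one even_iff_mod_2_eq_zero)
  finally show ?thesis .
qed

end


definition g0 :: "nat \<Rightarrow> nat \<Rightarrow> nat" where
  "g0 n t = (if t = 2 then 2 * n else if t = 3 then 2 * n + 1 else if t = 2 * n then 2
     else if t = 2 * n + 1 then 3 else t)"

lemma g0_bij: "n \<ge> 2 \<Longrightarrow> bij_betw (g0 n) {..<4 * n} {..<4 * n}"
  by (rule bij_betw_byWitness[where f' = "g0 n"]) (auto simp: g0_def)

lemma vertex_enum_bij: "finite V \<Longrightarrow> bij_betw (vertex_enum V) {..<card V} V"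
proof -
  assume "finite V"
  from ex_bij_betw_nat_finite[OF this] have "\<exists>f. bij_betw f {..<card V} V" by (simp add: atLeast0LessThan)
  thus ?thesis unfolding vertex_enum_def by (rule someI_ex)
qed

context q4 begin

abbreviation "E0 \<equiv> \<lambda>s t. s \<noteq> t \<and> (qlab n s = 0 \<or> qlab n t = 0 \<or> qlab n s = qlab n t)"

lemma fin_carrier: "finite (carrier G)" using card4 n2 by (intro card_ge_0_finite) simp

lemma deg_psi: "x < 4 * n \<Longrightarrow> graph_deg (carrier G) (csc_adj G) (psi x) = card {u. u < 4 * n \<and> E0 x u}"
proof -
  assume x: "x < 4 * n"
  have "{u \<in> carrier G. csc_adj G (psi x) u} = psi ` {u. u < 4 * n \<and> E0 x u}"
  proof
    show "{u \<in> carrier G. csc_adj G (psi x) u} \<subseteq> psi ` {u. u < 4 * n \<and> E0 x u}"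
    proof
      fix u assume u: "u \<in> {u \<in> carrier G. csc_adj G (psi x) u}"
      then obtain t where t: "t < 4 * n" "u = psi t" using bij_betw_imp_surj_on[OF psi_bij] by force
      thus "u \<in> psi ` {u. u < 4 * n \<and> E0 x u}" using u csc_psi[OF x t(1)] by auto
    qed
    show "psi ` {u. u < 4 * n \<and> E0 x u} \<subseteq> {u \<in> carrier G. csc_adj G (psi x) u}"
      using csc_psi[OF x] psi_bij by (auto simp: bij_betw_def)
  qed
  moreover have "inj_on psi {u. u < 4 * n \<and> E0 x u}"
    by (rule inj_on_subset[OF bij_betw_imp_inj_on[OF psi_bij]]) auto
  ultimately show ?thesis unfolding graph_deg_def by (simp add: card_image)
qed

lemma spectrum_label:
  "sombor_spectrum (carrier G) (csc_adj G) = proots (char_poly (mat (4 * n) (4 * n) (\<lambda>(s,t). complex_of_real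
     (if E0 (g0 n s) (g0 n t) then
      sqrt (real (card {u. u < 4 * n \<and> E0 (g0 n s) u})^2 + real (card {u. u < 4 * n \<and> E0 (g0 n t) u})^2) else 0))))"
proof -
  define F where "F = (\<lambda>u w. complex_of_real (if csc_adj G u w then
     sqrt (real (graph_deg (carrier G) (csc_adj G) u)^2 + real (graph_deg (carrier G) (csc_adj G) w)^2) else 0))"
  have ve: "bij_betw (vertex_enum (carrier G)) {..<4 * n} (carrier G)"
    using vertex_enum_bij[OF fin_carrier] card4 by simp
  have h: "bij_betw (psi \<circ> g0 n) {..<4 * n} (carrier G)"
    by (rule bij_betw_trans[OF g0_bij[OF n2] psi_bij])
  have "map_mat complex_of_real (sombor_matrix (carrier G) (csc_adj G)) =
     mat (4 * n) (4 * n) (\<lambda>(i,j). F (vertex_enum (carrier G) i) (vertex_enum (carrier G) j))"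
    unfolding sombor_matrix_def F_def card4 by (rule eq_matI) (auto simp: Let_def)
  hence "sombor_spectrum (carrier G) (csc_adj G) = proots (char_poly (mat (4 * n) (4 * n) (\<lambda>(i,j). F (vertex_enum (carrier G) i) (vertex_enum (carrier G) j))))"
    unfolding sombor_spectrum_def by simp
  also have "char_poly (mat (4 * n) (4 * n) (\<lambda>(i,j). F (vertex_enum (carrier G) i) (vertex_enum (carrier G) j)))
     = char_poly (mat (4 * n) (4 * n) (\<lambda>(i,j). F ((psi \<circ> g0 n) i) ((psi \<circ> g0 n) j)))"
    by (rule charpoly_perm[OF ve h])
  also have "mat (4 * n) (4 * n) (\<lambda>(i,j). F ((psi \<circ> g0 n) i) ((psi \<circ> g0 n) j)) =
     mat (4 * n) (4 * n) (\<lambda>(s,t). complex_of_real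
     (if E0 (g0 n s) (g0 n t) then
      sqrt (real (card {u. u < 4 * n \<and> E0 (g0 n s) u})^2 + real (card {u. u < 4 * n \<and> E0 (g0 n t) u})^2) else 0))"
  proof (rule eq_matI)
    fix i j assume ij: "i < dim_row (mat (4 * n) (4 * n) (\<lambda>(s,t). complex_of_real
     (if E0 (g0 n s) (g0 n t) then
      sqrt (real (card {u. u < 4 * n \<and> E0 (g0 n s) u})^2 + real (card {u. u < 4 * n \<and> E0 (g0 n t) u})^2) else 0)))"
     "j < dim_col (mat (4 * n) (4 * n) (\<lambda>(s,t). complex_of_real
     (if E0 (g0 n s) (g0 n t) then
      sqrt (real (card {u. u < 4 * n \<and> E0 (g0 n s) u})^2 + real (card {u. u < 4 * n \<and> E0 (g0 n t) u})^2) else 0)))"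
    hence ij: "i < 4 * n" "j < 4 * n" by auto
    have gi: "g0 n i < 4 * n" "g0 n j < 4 * n" using g0_bij[OF n2] ij by (auto simp: bij_betw_def)
    show "mat (4 * n) (4 * n) (\<lambda>(i,j). F ((psi \<circ> g0 n) i) ((psi \<circ> g0 n) j)) $$ (i,j) = 
     mat (4 * n) (4 * n) (\<lambda>(s,t). complex_of_real
     (if E0 (g0 n s) (g0 n t) then
      sqrt (real (card {u. u < 4 * n \<and> E0 (g0 n s) u})^2 + real (card {u. u < 4 * n \<and> E0 (g0 n t) u})^2) else 0)) $$ (i,j)"
      using ij unfolding F_def by (simp add: deg_psi[OF gi(1)] deg_psi[OF gi(2)] csc_psi[OF gi])
  qed auto
  finally show ?thesis .
qed

end


lemma qlab_m0: "n \<ge> 2 \<Longrightarrow> card {t. t < 4 * n \<and> qlab n t = 0} = 2"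
proof -
  assume n: "n \<ge> 2"
  have "{t. t < 4 * n \<and> qlab n t = 0} = {0, n}" using n by (auto simp: qlab_def)
  thus ?thesis using n by simp
qed

lemma qlab_m1: "n \<ge> 2 \<Longrightarrow> card {t. t < 4 * n \<and> qlab n t = 1} = 2 * n - 2"
proof -
  assume n: "n \<ge> 2"
  have "{t. t < 4 * n \<and> qlab n t = 1} = {..<2 * n} - {0, n}" using n by (auto simp: qlab_def)
  thus ?thesis using n by (simp add: card_Diff_subset)
qed

lemma qlab_m2_odd: "n \<ge> 2 \<Longrightarrow> odd n \<Longrightarrow> card {t. t < 4 * n \<and> qlab n t = 2} = 2 * n"
proof -
  assume n: "n \<ge> 2" "odd n"
  have "{t. t < 4 * n \<and> qlab n t = 2} = {2 * n..<4 * n}" using n by (auto simp: qlab_def)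
  thus ?thesis by simp
qed

lemma mod2_helper: "r < 2 \<Longrightarrow> (2 * a + 2 * b + r) mod 2 = (r::nat)" by presburger

lemma qlab_even_set:
  assumes n: "n \<ge> 2" "even n" and r: "r < 2"
  shows "{t. t < 4 * n \<and> qlab n t = 2 + r} = (\<lambda>j. 2 * n + 2 * j + r) ` {..<n}"
proof
  show "{t. t < 4 * n \<and> qlab n t = 2 + r} \<subseteq> (\<lambda>j. 2 * n + 2 * j + r) ` {..<n}"
  proof
    fix t assume t: "t \<in> {t. t < 4 * n \<and> qlab n t = 2 + r}"
    hence t2: "2 * n \<le> t" "t mod 2 = r" "t < 4 * n" using n r by (auto simp: qlab_def split: if_splits)
    obtain d where d: "t = 2 * n + d" using t2(1) le_Suc_ex by blast
    have dr: "d mod 2 = r" using t2(2) unfolding d by simp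
    have "t = 2 * n + 2 * (d div 2) + r" unfolding d using dr div_mult_mod_eq[of d 2] by simp
    moreover have "d div 2 < n" using t2(3) d by auto
    ultimately show "t \<in> (\<lambda>j. 2 * n + 2 * j + r) ` {..<n}" by blast
  qed
  show "(\<lambda>j. 2 * n + 2 * j + r) ` {..<n} \<subseteq> {t. t < 4 * n \<and> qlab n t = 2 + r}"
    using n r by (auto simp: qlab_def mod2_helper)
qed

lemma qlab_m_even: "n \<ge> 2 \<Longrightarrow> even n \<Longrightarrow> r < 2 \<Longrightarrow> card {t. t < 4 * n \<and> qlab n t = 2 + r} = n"
proof -
  assume n: "n \<ge> 2" "even n" and r: "r < 2"
  have "inj_on (\<lambda>j. 2 * n + 2 * j + r) {..<n}" by (auto simp: inj_on_def)
  thus ?thesis unfolding qlab_even_set[OF n r] by (simp add: card_image)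
qed

lemma qlab_lt_odd: "odd n \<Longrightarrow> qlab n t < 3" by (simp add: qlab_def)
lemma qlab_lt_even: "even n \<Longrightarrow> qlab n t < 4" by (simp add: qlab_def)
lemma qlab_rep: "n \<ge> 2 \<Longrightarrow> qlab n (g0 n 0) = 0 \<and> qlab n (g0 n 1) = 1 \<and> qlab n (g0 n 2) = 2 \<and> (even n \<longrightarrow> qlab n (g0 n 3) = 3)"
  by (auto simp: qlab_def g0_def)

lemma sum_single_const: "finite B \<Longrightarrow> (\<Sum>s\<in>B. {#c#}) = replicate_mset (card B) c"
  by (induction B rule: finite_induct) auto

lemma mset_group:
  assumes "finite A" "\<And>s. s \<in> A \<Longrightarrow> \<tau> s < (k::nat)"
  shows "(\<Sum>s\<in>A. {#f (\<tau> s)#}) = (\<Sum>i<k. replicate_mset (card {s\<in>A. \<tau> s = i}) (f i))"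
proof -
  have "(\<Sum>s\<in>A. {#f (\<tau> s)#}) = (\<Sum>i<k. (\<Sum>s\<in>{x. x \<in> A \<and> \<tau> x = i}. {#f (\<tau> s)#}))"
    using assms by (intro sum.group[symmetric]) auto
  also have "\<dots> = (\<Sum>i<k. (\<Sum>s\<in>{x. x \<in> A \<and> \<tau> x = i}. {#f i#}))"
    by (intro sum.cong refl) auto
  also have "\<dots> = (\<Sum>i<k. replicate_mset (card {s\<in>A. \<tau> s = i}) (f i))"
    using assms by (intro sum.cong refl) (simp add: sum_single_const)
  finally show ?thesis .
qed

lemma card_tail:
  assumes "i < (k::nat)" "k \<le> N" "\<And>s. s < k \<Longrightarrow> \<tau> s = s"
  shows "card {s \<in> {k..<N}. \<tau> s = i} = card {s. s < N \<and> \<tau> s = i} - 1"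
proof -
  have "{s. s < N \<and> \<tau> s = i} = insert i {s \<in> {k..<N}. \<tau> s = i}"
  proof
    show "{s. s < N \<and> \<tau> s = i} \<subseteq> insert i {s \<in> {k..<N}. \<tau> s = i}"
    proof
      fix s assume s: "s \<in> {s. s < N \<and> \<tau> s = i}"
      show "s \<in> insert i {s \<in> {k..<N}. \<tau> s = i}"
      proof (cases "s < k")
        case True thus ?thesis using s assms(3)[OF True] by simp
      next
        case False thus ?thesis using s by simp
      qed
    qed
    show "insert i {s \<in> {k..<N}. \<tau> s = i} \<subseteq> {s. s < N \<and> \<tau> s = i}" using assms by auto
  qed
  moreover have "i \<notin> {s \<in> {k..<N}. \<tau> s = i}" using assms by auto
  moreover have "finite {s \<in> {k..<N}. \<tau> s = i}" by simp
  ultimately have "card {s. s < N \<and> \<tau> s = i} = Suc (card {s \<in> {k..<N}. \<tau> s = i})"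
    by (metis card_insert_disjoint)
  thus ?thesis by simp
qed


lemma mat_delete_mat: "mat_delete (mat n m f) i j = mat (n-1) (m-1) (\<lambda>(a,b). f (insert_index i a, insert_index j b))"
  by (rule eq_matI) (auto simp: mat_delete_def insert_index_def)
lemma det1: "det (mat (Suc 0) (Suc 0) f) = f (0,0)"
  using det_single[of "mat (Suc 0) (Suc 0) f"] by simp
lemma det2: "det (mat (Suc (Suc 0)) (Suc (Suc 0)) f) = (f (0,0) * f (1,1) - f(1,0)*f(0,1) :: 'a::comm_ring_1)"
  apply (subst laplace_expansion_column[where j=0 and n=2])
  apply (auto simp: cofactor_def mat_delete_mat det1 insert_index_def numeral_2_eq_2 lessThan_Suc)
  done
lemma det3: "det (mat (Suc (Suc (Suc 0))) (Suc (Suc (Suc 0))) f) = (f (0,0) * (f (1,1) * f (2,2) - f(2,1)*f(1,2)) - f(1,0)*(f(0,1)*f(2,2) - f(2,1)*f(0,2)) + f(2,0)*(f(0,1)*f(1,2) - f(1,1)*f(0,2)) :: 'a::comm_ring_1)"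
  apply (subst laplace_expansion_column[where j=0 and n=3])
  apply (auto simp: cofactor_def mat_delete_mat det2 insert_index_def numeral_3_eq_3 lessThan_Suc eval_nat_numeral)
  apply (simp add: algebra_simps)
  done

definition D3 :: "(nat \<times> nat \<Rightarrow> 'a::comm_ring_1) \<Rightarrow> 'a" where
  "D3 f = (f (0,0) * (f (1,1) * f (2,2) - f(2,1)*f(1,2)) - f(1,0)*(f(0,1)*f(2,2) - f(2,1)*f(0,2)) + f(2,0)*(f(0,1)*f(1,2) - f(1,1)*f(0,2)))"

lemma det4: "det (mat 4 4 f) = (f (0,0) * D3 (\<lambda>(a,b). f (Suc a, Suc b))
   - f (1,0) * D3 (\<lambda>(a,b). f (if a = 0 then a else Suc a, Suc b))
   + f (2,0) * D3 (\<lambda>(a,b). f (if a < 2 then a else Suc a, Suc b))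
   - f (3,0) * D3 (\<lambda>(a,b). f (a, Suc b)) :: 'a::comm_ring_1)"
  apply (subst laplace_expansion_column[where j=0 and n=4])
  apply (auto simp: cofactor_def mat_delete_mat insert_index_def lessThan_Suc eval_nat_numeral det3 D3_def)
  apply (simp add: algebra_simps)
  done

lemma cpm_mat: "B \<in> carrier_mat k k \<Longrightarrow> char_poly B = det (mat k k (\<lambda>(i,j). if i = j then [:- B $$ (i,j), 1:] else [: - B $$ (i,j) :]))"
proof -
  assume B: "B \<in> carrier_mat k k"
  have "char_poly_matrix B = mat k k (\<lambda>(i,j). if i = j then [:- B $$ (i,j), 1:] else [: - B $$ (i,j) :])"
    by (rule eq_matI) (use B in \<open>auto simp: cpm_index char_poly_matrix_def\<close>)
  thus ?thesis unfolding char_poly_def by simp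
qed

lemma const_mult_poly: "[:a:] * p = Polynomial.smult a p" by simp


lemma charpoly3_arrow:
  fixes B :: "'a::field mat"
  assumes B: "B \<in> carrier_mat 3 3" and z: "B $$ (1,2) = 0" "B $$ (2,1) = 0"
  shows "char_poly B = [:- B$$(0,0), 1:] * [:- B$$(1,1), 1:] * [:- B$$(2,2), 1:]
     - Polynomial.smult (B$$(0,1) * B$$(1,0)) [:- B$$(2,2), 1:] - Polynomial.smult (B$$(0,2) * B$$(2,0)) [:- B$$(1,1), 1:]"
  unfolding cpm_mat[OF B] using z
  by (simp add: eval_nat_numeral det3 algebra_simps const_mult_poly)

lemma charpoly4_arrow:
  fixes B :: "'a::field mat"
  assumes B: "B \<in> carrier_mat 4 4" and z: "B $$ (1,2) = 0" "B $$ (2,1) = 0" "B $$ (1,3) = 0" "B $$ (3,1) = 0"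
     "B $$ (2,3) = 0" "B $$ (3,2) = 0"
  shows "char_poly B = [:- B$$(0,0), 1:] * [:- B$$(1,1), 1:] * [:- B$$(2,2), 1:] * [:- B$$(3,3), 1:]
     - Polynomial.smult (B$$(0,1) * B$$(1,0)) ([:- B$$(2,2), 1:] * [:- B$$(3,3), 1:])
     - Polynomial.smult (B$$(0,2) * B$$(2,0)) ([:- B$$(1,1), 1:] * [:- B$$(3,3), 1:])
     - Polynomial.smult (B$$(0,3) * B$$(3,0)) ([:- B$$(1,1), 1:] * [:- B$$(2,2), 1:])"
  unfolding cpm_mat[OF B] det4 using z
  by (simp add: D3_def algebra_simps const_mult_poly eval_nat_numeral)


lemma count_bij:
  assumes g: "bij_betw g {..<N} {..<N}"
  shows "card {s. s < N \<and> L (g s) = j} = card {t. t < N \<and> L t = (j::nat)}"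
proof -
  have gN: "s < N \<Longrightarrow> g s < N" for s using g by (auto simp: bij_betw_def)
  have inj: "inj_on g {s. s < N \<and> L (g s) = j}"
    by (rule inj_on_subset[OF bij_betw_imp_inj_on[OF g]]) auto
  have surj: "g ` {..<N} = {..<N}" by (rule bij_betw_imp_surj_on[OF g])
  have "g ` {s. s < N \<and> L (g s) = j} = {t. t < N \<and> L t = j}"
  proof
    show "g ` {s. s < N \<and> L (g s) = j} \<subseteq> {t. t < N \<and> L t = j}" using gN by auto
    show "{t. t < N \<and> L t = j} \<subseteq> g ` {s. s < N \<and> L (g s) = j}"
    proof
      fix t assume t: "t \<in> {t. t < N \<and> L t = j}"
      hence "t \<in> g ` {..<N}" using surj by simp
      then obtain s where "s < N" "t = g s" by auto
      thus "t \<in> g ` {s. s < N \<and> L (g s) = j}" using t by auto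
    qed
  qed
  thus ?thesis using card_image[OF inj] by simp
qed

context q4 begin

lemma main_block:
  assumes Lk: "\<And>t. qlab n t < k" and kN: "k \<le> 4 * n" and rep: "\<And>s. s < k \<Longrightarrow> qlab n (g0 n s) = s"
  defines "m \<equiv> \<lambda>i. card {t. t < 4 * n \<and> qlab n t = i}"
  defines "dL \<equiv> \<lambda>i. if i = 0 then 4 * n - 1 else m 0 + m i - 1"
  defines "Wc \<equiv> \<lambda>i j. complex_of_real (if i = 0 \<or> j = 0 \<or> i = j then sqrt (real (dL i)^2 + real (dL j)^2) else 0)"
  shows "sombor_spectrum (carrier G) (csc_adj G) =
     proots (char_poly (mat k k (\<lambda>(i,j). of_nat (m j) * Wc i j - (if i = j then Wc i i else 0))))
     + (\<Sum>i<k. replicate_mset (m i - 1) (- Wc i i))"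
proof -
  let ?B = "mat k k (\<lambda>(i,j). of_nat (m j) * Wc i j - (if i = j then Wc i i else 0))"
  let ?\<tau> = "\<lambda>s. qlab n (g0 n s)"
  have g: "bij_betw (g0 n) {..<4 * n} {..<4 * n}" by (rule g0_bij[OF n2])
  have cp: "char_poly (mat (4 * n) (4 * n) (\<lambda>(s,t). complex_of_real
     (if E0 (g0 n s) (g0 n t) then
      sqrt (real (card {u. u < 4 * n \<and> E0 (g0 n s) u})^2 + real (card {u. u < 4 * n \<and> E0 (g0 n t) u})^2) else 0)))
     = char_poly ?B * (\<Prod>s\<in>{k..<4 * n}. [:Wc (?\<tau> s) (?\<tau> s), 1:])"
    unfolding m_def dL_def Wc_def
    by (rule label_charpoly[of "4 * n" "qlab n" k "g0 n"]) (use Lk kN g rep in auto)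
  have B: "?B \<in> carrier_mat k k" by simp
  have nz1: "char_poly ?B \<noteq> 0"
  proof
    assume "char_poly ?B = 0"
    thus False using degree_monic_char_poly[OF B] by simp
  qed
  have nz2: "(\<Prod>s\<in>{k..<4 * n}. [:Wc (?\<tau> s) (?\<tau> s), 1:]) \<noteq> 0" by simp
  have "proots (\<Prod>s\<in>{k..<4 * n}. [:Wc (?\<tau> s) (?\<tau> s), 1:]) = (\<Sum>s\<in>{k..<4 * n}. {#- Wc (?\<tau> s) (?\<tau> s)#})"
    by (subst proots_prod) auto
  also have "\<dots> = (\<Sum>i<k. replicate_mset (card {s\<in>{k..<4 * n}. ?\<tau> s = i}) (- Wc i i))"
    by (rule mset_group[where f = "\<lambda>i. - Wc i i"]) (use Lk in auto)
  also have "\<dots> = (\<Sum>i<k. replicate_mset (m i - 1) (- Wc i i))"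
  proof (intro sum.cong refl)
    fix i assume i: "i \<in> {..<k}"
    have "card {s\<in>{k..<4 * n}. ?\<tau> s = i} = card {s. s < 4 * n \<and> ?\<tau> s = i} - 1"
      by (rule card_tail) (use i kN rep in auto)
    also have "\<dots> = m i - 1" unfolding m_def using count_bij[OF g, of "qlab n" i] by simp
    finally show "replicate_mset (card {s\<in>{k..<4 * n}. ?\<tau> s = i}) (- Wc i i) = replicate_mset (m i - 1) (- Wc i i)" by simp
  qed
  finally have pr: "proots (\<Prod>s\<in>{k..<4 * n}. [:Wc (?\<tau> s) (?\<tau> s), 1:]) = (\<Sum>i<k. replicate_mset (m i - 1) (- Wc i i))" .
  show ?thesis unfolding spectrum_label cp proots_mult[OF nz1 nz2] pr ..
qed

end


lemma sqrt_double: "x \<ge> 0 \<Longrightarrow> sqrt (x^2 + x^2) = sqrt 2 * x"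
proof -
  assume x: "x \<ge> 0"
  have "sqrt (x^2 + x^2) = sqrt (2 * x^2)" by simp
  also have "\<dots> = sqrt 2 * sqrt (x^2)" by (rule real_sqrt_mult)
  finally show ?thesis using x by simp
qed

lemma rep_mset_add: "replicate_mset (a + b) x = replicate_mset a x + replicate_mset b x"
  by (induction a) auto

lemma poly_eq_by_eval: "(\<And>x. poly p x = poly q (x::complex)) \<Longrightarrow> p = q"
  using poly_eq_poly_eq_iff[of p q] by auto

context q4 begin

lemma Wc_facts:
  fixes dL :: "nat \<Rightarrow> nat" and Wc :: "nat \<Rightarrow> nat \<Rightarrow> complex"
  assumes Wc_def: "Wc = (\<lambda>i j. complex_of_real (if i = 0 \<or> j = 0 \<or> i = j then sqrt (real (dL i)^2 + real (dL j)^2) else 0))"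
  shows "Wc i i = complex_of_real (sqrt 2) * of_nat (dL i)"
    and "j \<noteq> 0 \<Longrightarrow> Wc 0 j * Wc j 0 = of_nat (dL 0)^2 + of_nat (dL j)^2"
    and "i \<noteq> 0 \<Longrightarrow> j \<noteq> 0 \<Longrightarrow> i \<noteq> j \<Longrightarrow> Wc i j = 0"
proof -
  show "Wc i i = complex_of_real (sqrt 2) * of_nat (dL i)"
    unfolding Wc_def by (simp add: real_sqrt_mult)
  show "j \<noteq> 0 \<Longrightarrow> Wc 0 j * Wc j 0 = of_nat (dL 0)^2 + of_nat (dL j)^2"
  proof -
    have a1: "Wc 0 j = complex_of_real (sqrt (real (dL 0)^2 + real (dL j)^2))" unfolding Wc_def by simp
    have a2: "Wc j 0 = complex_of_real (sqrt (real (dL 0)^2 + real (dL j)^2))" unfolding Wc_def by (simp add: add.commute)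
    have "Wc 0 j * Wc j 0 = complex_of_real (sqrt (real (dL 0)^2 + real (dL j)^2) * sqrt (real (dL 0)^2 + real (dL j)^2))"
      unfolding a1 a2 of_real_mult ..
    also have "\<dots> = complex_of_real (real (dL 0)^2 + real (dL j)^2)" by simp
    also have "\<dots> = of_nat (dL 0)^2 + of_nat (dL j)^2" by simp
    finally show ?thesis .
  qed
  show "i \<noteq> 0 \<Longrightarrow> j \<noteq> 0 \<Longrightarrow> i \<noteq> j \<Longrightarrow> Wc i j = 0" unfolding Wc_def by simp
qed

lemma odd_case:
  assumes odd: "odd n"
  defines "s \<equiv> complex_of_real (sqrt 2)" and "N \<equiv> (of_nat n :: complex)"
  defines "p \<equiv> (4*N - 1) * s" and "q \<equiv> (2*N - 1) * (2*N - 3) * s" and "r \<equiv> (2*N - 1) * (2*N + 1) * s"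
  shows "sombor_spectrum (carrier G) (csc_adj G) =
            replicate_mset 1 (- (4*N - 1) * s)
          + replicate_mset (2*n - 3) (- (2*N - 1) * s)
          + replicate_mset (2*n - 1) (- (2*N + 1) * s)
          + proots ([:-p, 1:] * [:-q, 1:] * [:-r, 1:]
                    - Polynomial.smult (8 * (N - 1) * (10 * N^2 - 6 * N + 1)) [:-r, 1:]
                    - Polynomial.smult (8 * N * (10 * N^2 - 2 * N + 1)) [:-q, 1:])"
proof -
  define m where "m = (\<lambda>i. card {t. t < 4 * n \<and> qlab n t = i})"
  define dL where "dL = (\<lambda>i. if i = 0 then 4 * n - 1 else m 0 + m i - 1)"
  define Wc where "Wc = (\<lambda>i j. complex_of_real (if i = 0 \<or> j = 0 \<or> i = j then sqrt (real (dL i)^2 + real (dL j)^2) else 0))"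
  define B where "B = mat 3 3 (\<lambda>(i,j). of_nat (m j) * Wc i j - (if i = j then Wc i i else 0))"
  have rep: "qlab n (g0 n s') = s'" if "s' < 3" for s'
  proof -
    have "s' = 0 \<or> s' = 1 \<or> s' = 2" using that by auto
    thus ?thesis using qlab_rep[OF n2] by auto
  qed
  have spec: "sombor_spectrum (carrier G) (csc_adj G) = proots (char_poly B) + (\<Sum>i<3. replicate_mset (m i - 1) (- Wc i i))"
    unfolding B_def m_def Wc_def dL_def
    by (rule main_block) (use qlab_lt_odd[OF odd] n2 rep in auto)
  have m0: "m 0 = 2" unfolding m_def using qlab_m0[OF n2] .
  have m1: "m 1 = 2 * n - 2" unfolding m_def using qlab_m1[OF n2] .
  have m2: "m 2 = 2 * n" unfolding m_def using qlab_m2_odd[OF n2 odd] .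
  have dL0: "dL 0 = 4 * n - 1" unfolding dL_def by simp
  have dL1: "dL 1 = 2 * n - 1" unfolding dL_def using m0 m1 n2 by simp
  have dL2: "dL 2 = 2 * n + 1" unfolding dL_def using m0 m2 n2 by simp
  have c1: "(of_nat (4 * n - 1) :: complex) = 4 * N - 1" using n2 unfolding N_def by (simp add: of_nat_diff)
  have c2: "(of_nat (2 * n - 1) :: complex) = 2 * N - 1" using n2 unfolding N_def by (simp add: of_nat_diff)
  have c3: "(of_nat (2 * n - 2) :: complex) = 2 * N - 2" using n2 unfolding N_def by (simp add: of_nat_diff)
  note W = Wc_facts[OF Wc_def]
  have W00: "Wc 0 0 = s * (4 * N - 1)" using W(1)[of 0] dL0 c1 unfolding s_def by simp
  have W11: "Wc 1 1 = s * (2 * N - 1)" using W(1)[of 1] dL1 c2 unfolding s_def by simp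
  have W22: "Wc 2 2 = s * (2 * N + 1)" using W(1)[of 2] dL2 unfolding s_def N_def by simp
  have W01: "Wc 0 1 * Wc 1 0 = (4 * N - 1)^2 + (2 * N - 1)^2" using W(2)[of 1] dL0 dL1 c1 c2 by simp
  have W02: "Wc 0 2 * Wc 2 0 = (4 * N - 1)^2 + (2 * N + 1)^2" using W(2)[of 2] dL0 dL2 c1 unfolding N_def by (simp add: add.commute)
  have W12: "Wc 1 2 = 0" "Wc 2 1 = 0" using W(3) by auto
  have Bc: "B \<in> carrier_mat 3 3" unfolding B_def by simp
  have c4: "(of_nat (2 * n) :: complex) = 2 * N" unfolding N_def by simp
  have e00: "B $$ (0,0) = p"
  proof -
    have "B $$ (0,0) = of_nat (m 0) * Wc 0 0 - Wc 0 0" unfolding B_def by simp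
    also have "\<dots> = 2 * (s * (4 * N - 1)) - s * (4 * N - 1)" unfolding m0 W00 by simp
    also have "\<dots> = p" unfolding p_def by (simp add: algebra_simps)
    finally show ?thesis .
  qed
  have e11: "B $$ (1,1) = q"
  proof -
    have "B $$ (1,1) = of_nat (m 1) * Wc 1 1 - Wc 1 1" unfolding B_def by simp
    also have "\<dots> = (2 * N - 2) * (s * (2 * N - 1)) - s * (2 * N - 1)" unfolding m1 c3 W11 ..
    also have "\<dots> = q" unfolding q_def by (simp add: algebra_simps)
    finally show ?thesis .
  qed
  have e22: "B $$ (2,2) = r"
  proof -
    have "B $$ (2,2) = of_nat (m 2) * Wc 2 2 - Wc 2 2" unfolding B_def by simp
    also have "\<dots> = (2 * N) * (s * (2 * N + 1)) - s * (2 * N + 1)" unfolding m2 c4 W22 ..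
    also have "\<dots> = r" unfolding r_def by (simp add: algebra_simps)
    finally show ?thesis .
  qed
  have e01: "B $$ (0,1) * B $$ (1,0) = 8 * (N - 1) * (10 * N^2 - 6 * N + 1)"
  proof -
    have "B $$ (0,1) * B $$ (1,0) = of_nat (m 1) * of_nat (m 0) * (Wc 0 1 * Wc 1 0)" unfolding B_def by simp
    also have "\<dots> = (2 * N - 2) * 2 * ((4 * N - 1)^2 + (2 * N - 1)^2)" unfolding m0 m1 c3 W01 by simp
    also have "\<dots> = 8 * (N - 1) * (10 * N^2 - 6 * N + 1)" by (simp add: algebra_simps power2_eq_square)
    finally show ?thesis .
  qed
  have e02: "B $$ (0,2) * B $$ (2,0) = 8 * N * (10 * N^2 - 2 * N + 1)"
  proof -
    have "B $$ (0,2) * B $$ (2,0) = of_nat (m 2) * of_nat (m 0) * (Wc 0 2 * Wc 2 0)" unfolding B_def by simp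
    also have "\<dots> = (2 * N) * 2 * ((4 * N - 1)^2 + (2 * N + 1)^2)" unfolding m0 m2 W02 c4 by simp
    also have "\<dots> = 8 * N * (10 * N^2 - 2 * N + 1)" by (simp add: algebra_simps power2_eq_square)
    finally show ?thesis .
  qed
  have z: "B $$ (1,2) = 0" "B $$ (2,1) = 0" unfolding B_def using W12 by simp_all
  have cpB: "char_poly B = [:-p, 1:] * [:-q, 1:] * [:-r, 1:]
                    - Polynomial.smult (8 * (N - 1) * (10 * N^2 - 6 * N + 1)) [:-r, 1:]
                    - Polynomial.smult (8 * N * (10 * N^2 - 2 * N + 1)) [:-q, 1:]"
    unfolding charpoly3_arrow[OF Bc z] e00 e11 e22 e01 e02 ..
  have sum3: "(\<Sum>i<3. replicate_mset (m i - 1) (- Wc i i)) =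
     replicate_mset 1 (- (4*N - 1) * s) + replicate_mset (2*n - 3) (- (2*N - 1) * s) + replicate_mset (2*n - 1) (- (2*N + 1) * s)"
  proof -
    have sx: "(\<Sum>i<3. F i) = F 0 + F 1 + F 2" for F :: "nat \<Rightarrow> complex multiset"
      by (simp add: eval_nat_numeral)
    have "(\<Sum>i<3. replicate_mset (m i - 1) (- Wc i i)) = replicate_mset (2 - 1) (- (s * (4 * N - 1)))
      + replicate_mset (2 * n - 2 - 1) (- (s * (2 * N - 1))) + replicate_mset (2 * n - 1) (- (s * (2 * N + 1)))"
      unfolding sx m0 m1 m2 W00 W11 W22 ..
    also have "\<dots> = replicate_mset 1 (- (4*N - 1) * s) + replicate_mset (2*n - 3) (- (2*N - 1) * s) + replicate_mset (2*n - 1) (- (2*N + 1) * s)"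
    proof -
      have v: "- (s * (4 * N - 1)) = - (4*N - 1) * s" "- (s * (2 * N - 1)) = - (2*N - 1) * s"
         "- (s * (2 * N + 1)) = - (2*N + 1) * s" by (simp_all add: algebra_simps)
      have w: "2 * n - 2 - 1 = 2 * n - 3" "(2::nat) - 1 = 1" by simp_all
      show ?thesis unfolding v w ..
    qed
    finally show ?thesis .
  qed
  show ?thesis unfolding spec cpB sum3 by (simp add: ac_simps)
qed

lemma even_case:
  assumes ev: "even n"
  defines "s \<equiv> complex_of_real (sqrt 2)" and "N \<equiv> (of_nat n :: complex)"
  defines "p \<equiv> (4*N - 1) * s" and "d \<equiv> (N - 1) * (N + 1) * s" and "q \<equiv> (2*N - 1) * (2*N - 3) * s"
  shows "sombor_spectrum (carrier G) (csc_adj G) =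
            replicate_mset 1 (- (4*N - 1) * s)
          + replicate_mset (2*n - 3) (- (2*N - 1) * s)
          + replicate_mset (2*n - 2) (- (N + 1) * s)
          + proots ([:-p, 1:] * [:-d, 1:]^2 * [:-q, 1:]
                    - Polynomial.smult (8 * (N - 1) * (10 * N^2 - 6 * N + 1)) ([:-d, 1:]^2)
                    - Polynomial.smult (4 * N * (17 * N^2 - 6 * N + 2)) ([:-q, 1:] * [:-d, 1:]))"
proof -
  define m where "m = (\<lambda>i. card {t. t < 4 * n \<and> qlab n t = i})"
  define dL where "dL = (\<lambda>i. if i = 0 then 4 * n - 1 else m 0 + m i - 1)"
  define Wc where "Wc = (\<lambda>i j. complex_of_real (if i = 0 \<or> j = 0 \<or> i = j then sqrt (real (dL i)^2 + real (dL j)^2) else 0))"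
  define B where "B = mat 4 4 (\<lambda>(i,j). of_nat (m j) * Wc i j - (if i = j then Wc i i else 0))"
  have rep: "qlab n (g0 n s') = s'" if "s' < 4" for s'
  proof -
    have "s' = 0 \<or> s' = 1 \<or> s' = 2 \<or> s' = 3" using that by auto
    thus ?thesis using qlab_rep[OF n2] ev by auto
  qed
  have spec: "sombor_spectrum (carrier G) (csc_adj G) = proots (char_poly B) + (\<Sum>i<4. replicate_mset (m i - 1) (- Wc i i))"
    unfolding B_def m_def Wc_def dL_def
    by (rule main_block) (use qlab_lt_even[OF ev] n2 rep in auto)
  have m0: "m 0 = 2" unfolding m_def using qlab_m0[OF n2] .
  have m1: "m 1 = 2 * n - 2" unfolding m_def using qlab_m1[OF n2] .
  have m2: "m 2 = n" unfolding m_def using qlab_m_even[OF n2 ev, of 0] by simp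
  have m3: "m 3 = n" unfolding m_def using qlab_m_even[OF n2 ev, of 1] by simp
  have dL0: "dL 0 = 4 * n - 1" unfolding dL_def by simp
  have dL1: "dL 1 = 2 * n - 1" unfolding dL_def using m0 m1 n2 by simp
  have dL2: "dL 2 = n + 1" unfolding dL_def using m0 m2 n2 by simp
  have dL3: "dL 3 = n + 1" unfolding dL_def using m0 m3 n2 by simp
  have c1: "(of_nat (4 * n - 1) :: complex) = 4 * N - 1" using n2 unfolding N_def by (simp add: of_nat_diff)
  have c2: "(of_nat (2 * n - 1) :: complex) = 2 * N - 1" using n2 unfolding N_def by (simp add: of_nat_diff)
  have c3: "(of_nat (2 * n - 2) :: complex) = 2 * N - 2" using n2 unfolding N_def by (simp add: of_nat_diff)
  have c4: "(of_nat n :: complex) = N" unfolding N_def by simp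
  note W = Wc_facts[OF Wc_def]
  have W00: "Wc 0 0 = s * (4 * N - 1)" using W(1)[of 0] dL0 c1 unfolding s_def by simp
  have W11: "Wc 1 1 = s * (2 * N - 1)" using W(1)[of 1] dL1 c2 unfolding s_def by simp
  have W22: "Wc 2 2 = s * (N + 1)" using W(1)[of 2] dL2 unfolding s_def N_def by simp
  have W33: "Wc 3 3 = s * (N + 1)" using W(1)[of 3] dL3 unfolding s_def N_def by simp
  have W01: "Wc 0 1 * Wc 1 0 = (4 * N - 1)^2 + (2 * N - 1)^2" using W(2)[of 1] dL0 dL1 c1 c2 by simp
  have W02: "Wc 0 2 * Wc 2 0 = (4 * N - 1)^2 + (N + 1)^2" using W(2)[of 2] dL0 dL2 c1 unfolding N_def by (simp add: add.commute)
  have W03: "Wc 0 3 * Wc 3 0 = (4 * N - 1)^2 + (N + 1)^2" using W(2)[of 3] dL0 dL3 c1 unfolding N_def by (simp add: add.commute)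
  have Wz: "Wc 1 2 = 0" "Wc 2 1 = 0" "Wc 1 3 = 0" "Wc 3 1 = 0" "Wc 2 3 = 0" "Wc 3 2 = 0" using W(3) by auto
  have Bc: "B \<in> carrier_mat 4 4" unfolding B_def by simp
  have e00: "B $$ (0,0) = p"
  proof -
    have "B $$ (0,0) = of_nat (m 0) * Wc 0 0 - Wc 0 0" unfolding B_def by simp
    also have "\<dots> = 2 * (s * (4 * N - 1)) - s * (4 * N - 1)" unfolding m0 W00 by simp
    also have "\<dots> = p" unfolding p_def by (simp add: algebra_simps)
    finally show ?thesis .
  qed
  have e11: "B $$ (1,1) = q"
  proof -
    have "B $$ (1,1) = of_nat (m 1) * Wc 1 1 - Wc 1 1" unfolding B_def by simp
    also have "\<dots> = (2 * N - 2) * (s * (2 * N - 1)) - s * (2 * N - 1)" unfolding m1 c3 W11 ..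
    also have "\<dots> = q" unfolding q_def by (simp add: algebra_simps)
    finally show ?thesis .
  qed
  have e22: "B $$ (2,2) = d"
  proof -
    have "B $$ (2,2) = of_nat (m 2) * Wc 2 2 - Wc 2 2" unfolding B_def by simp
    also have "\<dots> = N * (s * (N + 1)) - s * (N + 1)" unfolding m2 c4 W22 ..
    also have "\<dots> = d" unfolding d_def by (simp add: algebra_simps)
    finally show ?thesis .
  qed
  have e33: "B $$ (3,3) = d"
  proof -
    have "B $$ (3,3) = of_nat (m 3) * Wc 3 3 - Wc 3 3" unfolding B_def by simp
    also have "\<dots> = N * (s * (N + 1)) - s * (N + 1)" unfolding m3 c4 W33 ..
    also have "\<dots> = d" unfolding d_def by (simp add: algebra_simps)
    finally show ?thesis .
  qed
  have e01: "B $$ (0,1) * B $$ (1,0) = 8 * (N - 1) * (10 * N^2 - 6 * N + 1)"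
  proof -
    have "B $$ (0,1) * B $$ (1,0) = of_nat (m 1) * of_nat (m 0) * (Wc 0 1 * Wc 1 0)" unfolding B_def by simp
    also have "\<dots> = (2 * N - 2) * 2 * ((4 * N - 1)^2 + (2 * N - 1)^2)" unfolding m0 m1 c3 W01 by simp
    also have "\<dots> = 8 * (N - 1) * (10 * N^2 - 6 * N + 1)" by (simp add: algebra_simps power2_eq_square)
    finally show ?thesis .
  qed
  have e02: "B $$ (0,2) * B $$ (2,0) = 2 * N * (17 * N^2 - 6 * N + 2)"
  proof -
    have "B $$ (0,2) * B $$ (2,0) = of_nat (m 2) * of_nat (m 0) * (Wc 0 2 * Wc 2 0)" unfolding B_def by simp
    also have "\<dots> = N * 2 * ((4 * N - 1)^2 + (N + 1)^2)" unfolding m0 m2 W02 c4 by simp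
    also have "\<dots> = 2 * N * (17 * N^2 - 6 * N + 2)" by (simp add: algebra_simps power2_eq_square)
    finally show ?thesis .
  qed
  have e03: "B $$ (0,3) * B $$ (3,0) = 2 * N * (17 * N^2 - 6 * N + 2)"
  proof -
    have "B $$ (0,3) * B $$ (3,0) = of_nat (m 3) * of_nat (m 0) * (Wc 0 3 * Wc 3 0)" unfolding B_def by simp
    also have "\<dots> = N * 2 * ((4 * N - 1)^2 + (N + 1)^2)" unfolding m0 m3 W03 c4 by simp
    also have "\<dots> = 2 * N * (17 * N^2 - 6 * N + 2)" by (simp add: algebra_simps power2_eq_square)
    finally show ?thesis .
  qed
  have z: "B $$ (1,2) = 0" "B $$ (2,1) = 0" "B $$ (1,3) = 0" "B $$ (3,1) = 0" "B $$ (2,3) = 0" "B $$ (3,2) = 0"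
    unfolding B_def using Wz by simp_all
  have cpB: "char_poly B = [:-p, 1:] * [:-q, 1:] * [:-d, 1:] * [:-d, 1:]
     - Polynomial.smult (8 * (N - 1) * (10 * N^2 - 6 * N + 1)) ([:-d, 1:] * [:-d, 1:])
     - Polynomial.smult (2 * N * (17 * N^2 - 6 * N + 2)) ([:-q, 1:] * [:-d, 1:])
     - Polynomial.smult (2 * N * (17 * N^2 - 6 * N + 2)) ([:-q, 1:] * [:-d, 1:])"
    unfolding charpoly4_arrow[OF Bc z] e00 e11 e22 e33 e01 e02 e03 ..
  also have "\<dots> = [:-p, 1:] * [:-d, 1:]^2 * [:-q, 1:]
                    - Polynomial.smult (8 * (N - 1) * (10 * N^2 - 6 * N + 1)) ([:-d, 1:]^2)
                    - Polynomial.smult (4 * N * (17 * N^2 - 6 * N + 2)) ([:-q, 1:] * [:-d, 1:])"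
    by (rule poly_eq_by_eval) (simp add: algebra_simps power2_eq_square)
  finally have cpB: "char_poly B = [:-p, 1:] * [:-d, 1:]^2 * [:-q, 1:]
                    - Polynomial.smult (8 * (N - 1) * (10 * N^2 - 6 * N + 1)) ([:-d, 1:]^2)
                    - Polynomial.smult (4 * N * (17 * N^2 - 6 * N + 2)) ([:-q, 1:] * [:-d, 1:])" .
  have sum4: "(\<Sum>i<4. replicate_mset (m i - 1) (- Wc i i)) =
     replicate_mset 1 (- (4*N - 1) * s) + replicate_mset (2*n - 3) (- (2*N - 1) * s) + replicate_mset (2*n - 2) (- (N + 1) * s)"
  proof -
    have sx: "(\<Sum>i<4. F i) = F 0 + F 1 + F 2 + F 3" for F :: "nat \<Rightarrow> complex multiset"
      by (simp add: eval_nat_numeral)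
    have "(\<Sum>i<4. replicate_mset (m i - 1) (- Wc i i)) = replicate_mset (2 - 1) (- (s * (4 * N - 1)))
      + replicate_mset (2 * n - 2 - 1) (- (s * (2 * N - 1))) + replicate_mset (n - 1) (- (s * (N + 1)))
      + replicate_mset (n - 1) (- (s * (N + 1)))"
      unfolding sx m0 m1 m2 m3 W00 W11 W22 W33 ..
    also have "\<dots> = replicate_mset 1 (- (4*N - 1) * s) + replicate_mset (2*n - 3) (- (2*N - 1) * s) + replicate_mset (2*n - 2) (- (N + 1) * s)"
    proof -
      have v: "- (s * (4 * N - 1)) = - (4*N - 1) * s" "- (s * (2 * N - 1)) = - (2*N - 1) * s"
         "- (s * (N + 1)) = - (N + 1) * s" by (simp_all add: algebra_simps)
      have w: "2 * n - 2 - 1 = 2 * n - 3" "(2::nat) - 1 = 1" by simp_all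
      have r: "replicate_mset (n - 1) x + replicate_mset (n - 1) x = replicate_mset (2 * n - 2) x" for x :: complex
      proof -
        have "2 * n - 2 = (n - 1) + (n - 1)" using n2 by simp
        thus ?thesis by (simp add: rep_mset_add)
      qed
      show ?thesis unfolding v w add.assoc r ..
    qed
    finally show ?thesis .
  qed
  show ?thesis unfolding spec cpB sum4 by (simp add: ac_simps)
qed

end

theorem corollary4p8:
  fixes G :: "('g, 'b) monoid_scheme" and a b :: 'g and n :: nat
  assumes "group G" and "n \<ge> 2"
    and "a \<in> carrier G" and "b \<in> carrier G"
    and "generate G {a, b} = carrier G"
    and "card (carrier G) = 4 * n"
    and "a [^]\<^bsub>G\<^esub> (2 * n) = \<one>\<^bsub>G\<^esub>"
    and "a [^]\<^bsub>G\<^esub> n = b [^]\<^bsub>G\<^esub> (2::nat)"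
    and "b \<otimes>\<^bsub>G\<^esub> a = inv\<^bsub>G\<^esub> a \<otimes>\<^bsub>G\<^esub> b"
  shows
   "(odd n \<longrightarrow>
      (let s = complex_of_real (sqrt 2); N = (of_nat n :: complex);
           p = (4*N - 1) * s; q = (2*N - 1) * (2*N - 3) * s; r = (2*N - 1) * (2*N + 1) * s
       in sombor_spectrum (carrier G) (csc_adj G) =
            replicate_mset 1 (- (4*N - 1) * s)
          + replicate_mset (2*n - 3) (- (2*N - 1) * s)
          + replicate_mset (2*n - 1) (- (2*N + 1) * s)
          + proots ([:-p, 1:] * [:-q, 1:] * [:-r, 1:]
                    - Polynomial.smult (8 * (N - 1) * (10 * N^2 - 6 * N + 1)) [:-r, 1:]
                    - Polynomial.smult (8 * N * (10 * N^2 - 2 * N + 1)) [:-q, 1:])))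
    \<and> (even n \<longrightarrow>
      (let s = complex_of_real (sqrt 2); N = (of_nat n :: complex);
           p = (4*N - 1) * s; d = (N - 1) * (N + 1) * s; q = (2*N - 1) * (2*N - 3) * s
       in sombor_spectrum (carrier G) (csc_adj G) =
            replicate_mset 1 (- (4*N - 1) * s)
          + replicate_mset (2*n - 3) (- (2*N - 1) * s)
          + replicate_mset (2*n - 2) (- (N + 1) * s)
          + proots ([:-p, 1:] * [:-d, 1:]^2 * [:-q, 1:]
                    - Polynomial.smult (8 * (N - 1) * (10 * N^2 - 6 * N + 1)) ([:-d, 1:]^2)
                    - Polynomial.smult (4 * N * (17 * N^2 - 6 * N + 2)) ([:-q, 1:] * [:-d, 1:]))))"
  proof -
  interpret Q: q4 G a b n
    by (intro q4.intro q4_axioms.intro) (use assms in auto)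
  show ?thesis unfolding Let_def using Q.odd_case Q.even_case by blast
qed

end
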